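(* Let $H$ be a connected hypergraph, let $u_1,u_2$ be two distinct vertices of $H$, and let $G_{r_1},G_{r_2}$ be connected rooted hypergraphs with roots $r_1,r_2$, each having at least one edge, vertex-disjoint from $H$ and from each other. Let $H_1$ be obtained from $H$ by identifying both $r_1$ and $r_2$ with $u_1$, and $H_2$ be obtained from $H$ by identifying $r_1$ with $u_1$ and $r_2$ with $u_2$. Then $\rho(H_2)>\rho(H_1)$ if one of the following holds: (1) $d_H(u_1)=d_H(u_2)=d_H(u_1,u_2)=1$; (2) $\sigma_{H_1}(V'(G_{r_1}))+x_{u_1}\ge \sigma_{H_1}(V(H))$, where $\mathbf{x}=\mathbf{x}(H_1)$.
   Context: For a connected hypergraph $G$, $d_G(u,v)$ is the length of a shortest path between $u$ and $v$ (a path being a sequence $(v_0,e_1,v_1,\dots,e_p,v_p)$ with $v_{i-1},v_i\in e_i$, $v_{i-1}\ne v_i$, all $v_i,e_i$ distinct, of length $p$), $d_G(v)$ is the number of edges containing $v$, $D(G)=(d_G(u,v))$ is the distance matrix and $\rho(G)$ is its largest eigenvalue. The distance Perron vector $\mathbf{x}(G)$ is the unique positive unit eigenvector of $D(G)$ for $\rho(G)$, and $x_v$ is its entry at $v$. For $X\subseteq V(G)$, $\sigma_G(X)$ is the sum of the entries of $\mathbf{x}(G)$ over $X$. $V'(G_{r_1})$ denotes the set of vertices of the copy of $G_{r_1}$ in $H_1$ other than its root (identified with $u_1$); $V(H)$ is regarded as a subset of $V(H_1)$. *)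

theory Defs
  imports Complex_Main
begin

definition hypergraph :: "'a set \<Rightarrow> 'a set set \<Rightarrow> bool" where
  "hypergraph V E \<longleftrightarrow> finite V \<and> (\<forall>e\<in>E. e \<subseteq> V \<and> card e \<ge> 2)"

definition hpath :: "'a set set \<Rightarrow> 'a list \<Rightarrow> 'a set list \<Rightarrow> bool" where
  "hpath E vs es \<longleftrightarrow> length vs = length es + 1 \<and> distinct vs \<and> distinct es \<and>
     (\<forall>i < length es. es ! i \<in> E \<and> vs ! i \<in> es ! i \<and> vs ! Suc i \<in> es ! i
                      \<and> vs ! i \<noteq> vs ! Suc i)"

definition hconnected :: "'a set \<Rightarrow> 'a set set \<Rightarrow> bool" where
  "hconnected V E \<longleftrightarrow> (\<forall>u\<in>V. \<forall>v\<in>V. \<exists>vs es. hpath E vs es \<and> hd vs = u \<and> last vs = v)"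

definition hdist :: "'a set set \<Rightarrow> 'a \<Rightarrow> 'a \<Rightarrow> nat" where
  "hdist E u v = (LEAST p. \<exists>vs es. hpath E vs es \<and> hd vs = u \<and> last vs = v \<and> length es = p)"

definition hdeg :: "'a set set \<Rightarrow> 'a \<Rightarrow> nat" where
  "hdeg E v = card {e\<in>E. v \<in> e}"

definition dist_eigenpair :: "'a set \<Rightarrow> 'a set set \<Rightarrow> real \<Rightarrow> ('a \<Rightarrow> real) \<Rightarrow> bool" where
  "dist_eigenpair V E lam x \<longleftrightarrow> (\<forall>v. v \<notin> V \<longrightarrow> x v = 0) \<and> (\<exists>v\<in>V. x v \<noteq> 0) \<and>
     (\<forall>u\<in>V. (\<Sum>v\<in>V. real (hdist E u v) * x v) = lam * x u)"

definition dist_rho :: "'a set \<Rightarrow> 'a set set \<Rightarrow> real" where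
  "dist_rho V E = Max {lam. \<exists>x. dist_eigenpair V E lam x}"

definition perron :: "'a set \<Rightarrow> 'a set set \<Rightarrow> 'a \<Rightarrow> real" where
  "perron V E = (THE x. dist_eigenpair V E (dist_rho V E) x \<and> (\<forall>v\<in>V. x v > 0)
                       \<and> (\<Sum>v\<in>V. (x v)\<^sup>2) = 1)"

definition sigma :: "'a set \<Rightarrow> 'a set set \<Rightarrow> 'a set \<Rightarrow> real" where
  "sigma V E X = (\<Sum>v\<in>X. perron V E v)"

definition subst_root :: "'a \<Rightarrow> 'a \<Rightarrow> 'a \<Rightarrow> 'a" where
  "subst_root r u x = (if x = r then u else x)"

definition glue2_V :: "'a set \<Rightarrow> 'a set \<Rightarrow> 'a \<Rightarrow> 'a \<Rightarrow> 'a set \<Rightarrow> 'a \<Rightarrow> 'a \<Rightarrow> 'a set" where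
  "glue2_V VH V1 r1 w1 V2 r2 w2 = VH \<union> subst_root r1 w1 ` V1 \<union> subst_root r2 w2 ` V2"

definition glue2_E :: "'a set set \<Rightarrow> 'a set set \<Rightarrow> 'a \<Rightarrow> 'a \<Rightarrow> 'a set set \<Rightarrow> 'a \<Rightarrow> 'a \<Rightarrow> 'a set set" where
  "glue2_E EH E1 r1 w1 E2 r2 w2 = EH \<union> (\<lambda>e. subst_root r1 w1 ` e) ` E1 \<union> (\<lambda>e. subst_root r2 w2 ` e) ` E2"

end

theory Submission
  imports Defs "Jordan_Normal_Form.Char_Poly" "HOL-Analysis.Function_Topology"
begin

definition hadj :: "'a set set \<Rightarrow> 'a \<Rightarrow> 'a \<Rightarrow> bool" where
  "hadj E a b \<longleftrightarrow> (\<exists>e\<in>E. a \<in> e \<and> b \<in> e \<and> a \<noteq> b)"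

lemma hadj_sym: "hadj E a b \<Longrightarrow> hadj E b a"
  unfolding hadj_def by blast

lemma walk_sym: "(hadj E ^^ n) a b \<Longrightarrow> (hadj E ^^ n) b a"
proof (induction n arbitrary: b)
  case 0 then show ?case by simp
next
  case (Suc n)
  from Suc.prems obtain c where "(hadj E ^^ n) a c" "hadj E c b" by auto
  then have "(hadj E ^^ n) c a" using Suc.IH by blast
  then show ?case by (rule relpowp_Suc_I2[where P="hadj E", OF hadj_sym[OF \<open>hadj E c b\<close>]])
qed

lemma walk_trans: "(hadj E ^^ m) a b \<Longrightarrow> (hadj E ^^ n) b c \<Longrightarrow> (hadj E ^^ (m+n)) a c"
  by (auto simp: relpowp_add)

lemma hpathI:
  assumes "length vs = length es + 1" "distinct vs" "distinct es"
    "\<And>i. i < length es \<Longrightarrow> es ! i \<in> E \<and> vs ! i \<in> es ! i \<and> vs ! Suc i \<in> es ! i \<and> vs ! i \<noteq> vs ! Suc i"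
  shows "hpath E vs es"
  using assms unfolding hpath_def by blast

lemma path_walk_aux:
  assumes "hpath E vs es" "k \<le> length es"
  shows "(hadj E ^^ k) (vs ! 0) (vs ! k)"
  using assms(2)
proof (induction k)
  case 0 then show ?case by simp
next
  case (Suc k)
  then have "k < length es" by simp
  with assms(1) have "hadj E (vs ! k) (vs ! Suc k)"
    unfolding hpath_def hadj_def by blast
  with Suc show ?case by auto
qed

lemma path_walk:
  assumes "hpath E vs es"
  shows "(hadj E ^^ length es) (hd vs) (last vs)"
proof -
  have l: "length vs = length es + 1" using assms unfolding hpath_def by simp
  then have "vs \<noteq> []" by auto
  then have "hd vs = vs ! 0" "last vs = vs ! length es"
    using l by (auto simp: hd_conv_nth last_conv_nth)
  then show ?thesis using path_walk_aux[OF assms, of "length es"] by simp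
qed

lemma walk_path:
  assumes "(hadj E ^^ n) u v"
  shows "\<exists>vs es. hpath E vs es \<and> hd vs = u \<and> last vs = v \<and> length es \<le> n"
  using assms
proof (induction n arbitrary: v)
  case 0
  then have "u = v" by simp
  moreover have "hpath E [u] []" unfolding hpath_def by simp
  ultimately show ?case by fastforce
next
  case (Suc n)
  from Suc.prems obtain w where w: "(hadj E ^^ n) u w" "hadj E w v" by auto
  from Suc.IH[OF w(1)] obtain vs es where P: "hpath E vs es" "hd vs = u" "last vs = w"
    "length es \<le> n" by blast
  from w(2) obtain e where e: "e \<in> E" "w \<in> e" "v \<in> e" "w \<noteq> v" unfolding hadj_def by blast
  have l: "length vs = length es + 1" and dv: "distinct vs" and de: "distinct es"
    and st: "\<And>i. i < length es \<Longrightarrow> es ! i \<in> E \<and> vs ! i \<in> es ! i \<and> vs ! Suc i \<in> es ! i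
                      \<and> vs ! i \<noteq> vs ! Suc i"
    using P(1) unfolding hpath_def by auto
  have ne: "vs \<noteq> []" using l by auto
  have hd0: "hd vs = vs ! 0" using ne by (simp add: hd_conv_nth)
  have lastn: "last vs = vs ! length es" using ne l by (simp add: last_conv_nth)
  show ?case
  proof (cases "v \<in> set vs")
    case True
    then obtain k where k: "k < length vs" "vs ! k = v" by (auto simp: in_set_conv_nth)
    define vs' where "vs' = take (Suc k) vs"
    define es' where "es' = take k es"
    have kl: "k \<le> length es" using k l by simp
    have "hpath E vs' es'"
    proof (rule hpathI)
      show "length vs' = length es' + 1" unfolding vs'_def es'_def using k kl by simp
      show "distinct vs'" unfolding vs'_def using dv by simp
      show "distinct es'" unfolding es'_def using de by simp
      fix i assume i: "i < length es'"
      then have ik: "i < k" "i < length es" unfolding es'_def using kl by auto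
      have "es' ! i = es ! i" "vs' ! i = vs ! i" "vs' ! Suc i = vs ! Suc i"
        unfolding es'_def vs'_def using ik by auto
      then show "es' ! i \<in> E \<and> vs' ! i \<in> es' ! i \<and> vs' ! Suc i \<in> es' ! i \<and> vs' ! i \<noteq> vs' ! Suc i"
        using st[OF ik(2)] by simp
    qed
    moreover have "hd vs' = u" unfolding vs'_def using P(2) hd0 ne by (simp add: hd_conv_nth)
    moreover have "last vs' = v" unfolding vs'_def using k by (simp add: take_Suc_conv_app_nth)
    moreover have "length es' \<le> Suc n" unfolding es'_def using P(4) by simp
    ultimately show ?thesis by blast
  next
    case vn: False
    show ?thesis
    proof (cases "e \<in> set es")
      case True
      then obtain k where k: "k < length es" "es ! k = e" by (auto simp: in_set_conv_nth)
      define vs' where "vs' = take (Suc k) vs @ [v]"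
      define es' where "es' = take k es @ [e]"
      have ek: "e \<notin> set (take k es)"
      proof
        assume "e \<in> set (take k es)"
        then obtain j where j: "j < k" "es ! j = e" using k by (auto simp: in_set_conv_nth)
        then have "es ! j = es ! k" using k by simp
        then show False using j k de nth_eq_iff_index_eq[of es j k] by simp
      qed
      have "hpath E vs' es'"
      proof (rule hpathI)
        show "length vs' = length es' + 1" unfolding vs'_def es'_def using k l by simp
        show "distinct vs'" unfolding vs'_def using dv vn by (auto dest: in_set_takeD)
        show "distinct es'" unfolding es'_def using de ek by simp
        fix i assume i: "i < length es'"
        then have ik: "i \<le> k" unfolding es'_def using k by simp
        show "es' ! i \<in> E \<and> vs' ! i \<in> es' ! i \<and> vs' ! Suc i \<in> es' ! i \<and> vs' ! i \<noteq> vs' ! Suc i"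
        proof (cases "i < k")
          case True
          have "es' ! i = es ! i" "vs' ! i = vs ! i" "vs' ! Suc i = vs ! Suc i"
            unfolding es'_def vs'_def using True k l by (simp_all add: nth_append)
          then show ?thesis using st[of i] True k by simp
        next
          case False
          then have ik2: "i = k" using ik by simp
          have "es' ! i = e" "vs' ! i = vs ! k" "vs' ! Suc i = v"
            unfolding es'_def vs'_def using ik2 k l by (simp_all add: nth_append)
          moreover have "vs ! k \<in> set vs" using k l by simp
          ultimately show ?thesis using st[of k] k e vn by auto
        qed
      qed
      moreover have "hd vs' = u" unfolding vs'_def using P(2) ne by (cases vs) auto
      moreover have "last vs' = v" unfolding vs'_def by simp
      moreover have "length es' \<le> Suc n" unfolding es'_def using P(4) k by simp
      ultimately show ?thesis by blast
    next
      case en: False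
      define vs' where "vs' = vs @ [v]"
      define es' where "es' = es @ [e]"
      have "hpath E vs' es'"
      proof (rule hpathI)
        show "length vs' = length es' + 1" unfolding vs'_def es'_def using l by simp
        show "distinct vs'" unfolding vs'_def using dv vn by auto
        show "distinct es'" unfolding es'_def using de en by simp
        fix i assume i: "i < length es'"
        show "es' ! i \<in> E \<and> vs' ! i \<in> es' ! i \<and> vs' ! Suc i \<in> es' ! i \<and> vs' ! i \<noteq> vs' ! Suc i"
        proof (cases "i < length es")
          case True
          have "es' ! i = es ! i" "vs' ! i = vs ! i" "vs' ! Suc i = vs ! Suc i"
            unfolding es'_def vs'_def using True l by (simp_all add: nth_append)
          then show ?thesis using st[of i] True by simp
        next
          case False
          then have ik2: "i = length es" using i unfolding es'_def by simp
          have "es' ! i = e" "vs' ! i = w" "vs' ! Suc i = v"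
            unfolding es'_def vs'_def using ik2 l P(3) lastn by (simp_all add: nth_append)
          then show ?thesis using e by auto
        qed
      qed
      moreover have "hd vs' = u" unfolding vs'_def using P(2) ne by simp
      moreover have "last vs' = v" unfolding vs'_def by simp
      moreover have "length es' \<le> Suc n" unfolding es'_def using P(4) by simp
      ultimately show ?thesis by blast
    qed
  qed
qed

lemma hdist_le: "(hadj E ^^ n) u v \<Longrightarrow> hdist E u v \<le> n"
proof -
  assume "(hadj E ^^ n) u v"
  from walk_path[OF this] obtain vs es where "hpath E vs es" "hd vs = u" "last vs = v" "length es \<le> n"
    by blast
  then have "hdist E u v \<le> length es" unfolding hdist_def by (intro Least_le) blast
  then show ?thesis using \<open>length es \<le> n\<close> by simp
qed

lemma hdist_walk: "(hadj E ^^ n) u v \<Longrightarrow> (hadj E ^^ hdist E u v) u v"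
proof -
  assume "(hadj E ^^ n) u v"
  from walk_path[OF this] obtain vs es where "hpath E vs es" "hd vs = u" "last vs = v"
    by blast
  then have "\<exists>p vs es. hpath E vs es \<and> hd vs = u \<and> last vs = v \<and> length es = p" by blast
  then have "\<exists>vs es. hpath E vs es \<and> hd vs = u \<and> last vs = v \<and> length es = hdist E u v"
    unfolding hdist_def by (rule LeastI_ex)
  then obtain vs' es' where P: "hpath E vs' es'" "hd vs' = u" "last vs' = v" "length es' = hdist E u v"
    by blast
  from path_walk[OF P(1)] show ?thesis unfolding P(2,3,4) .
qed

lemma hdist_ge:
  assumes "(hadj E ^^ n) u v" "\<And>m. (hadj E ^^ m) u v \<Longrightarrow> f \<le> m"
  shows "f \<le> hdist E u v"
  by (rule assms(2)[OF hdist_walk[OF assms(1)]])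

lemma hdist_self: "hdist E u u = 0"
  using hdist_le[where n=0 and E=E and u=u and v=u] by simp

lemma hdist_sym: "(hadj E ^^ n) u v \<Longrightarrow> hdist E u v = hdist E v u"
proof -
  assume w: "(hadj E ^^ n) u v"
  have "hdist E v u \<le> hdist E u v" by (rule hdist_le[OF walk_sym[OF hdist_walk[OF w]]])
  moreover have "hdist E u v \<le> hdist E v u" by (rule hdist_le[OF walk_sym[OF hdist_walk[OF walk_sym[OF w]]]])
  ultimately show ?thesis by simp
qed

lemma hdist_triangle: "(hadj E ^^ n) u v \<Longrightarrow> (hadj E ^^ m) v w \<Longrightarrow>
    hdist E u w \<le> hdist E u v + hdist E v w"
proof -
  assume a: "(hadj E ^^ n) u v" and b: "(hadj E ^^ m) v w"
  show ?thesis by (rule hdist_le[OF walk_trans[OF hdist_walk[OF a] hdist_walk[OF b]]])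
qed

lemma hdist_pos: "(hadj E ^^ n) u v \<Longrightarrow> u \<noteq> v \<Longrightarrow> 1 \<le> hdist E u v"
proof -
  assume w: "(hadj E ^^ n) u v" and ne: "u \<noteq> v"
  have w': "(hadj E ^^ hdist E u v) u v" by (rule hdist_walk[OF w])
  show ?thesis
  proof (rule ccontr)
    assume "\<not> 1 \<le> hdist E u v"
    then have "hdist E u v = 0" by simp
    then show False using w' ne by simp
  qed
qed

lemma hdist_lip: "(hadj E ^^ n) u a \<Longrightarrow> a \<in> e \<Longrightarrow> b \<in> e \<Longrightarrow> e \<in> E \<Longrightarrow>
    hdist E u b \<le> hdist E u a + 1"
proof -
  assume *: "(hadj E ^^ n) u a" "a \<in> e" "b \<in> e" "e \<in> E"
  show ?thesis
  proof (cases "a = b")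
    case True then show ?thesis by simp
  next
    case False
    then have ab: "hadj E a b" using * unfolding hadj_def by blast
    have "(hadj E ^^ Suc (hdist E u a)) u b" by (rule relpowp_Suc_I[where P="hadj E", OF hdist_walk[OF *(1)] ab])
    then have "hdist E u b \<le> Suc (hdist E u a)" by (rule hdist_le)
    then show ?thesis by simp
  qed
qed

lemma conn_walk: "hconnected V E \<Longrightarrow> u \<in> V \<Longrightarrow> v \<in> V \<Longrightarrow> \<exists>n. (hadj E ^^ n) u v"
proof -
  assume "hconnected V E" "u \<in> V" "v \<in> V"
  then obtain vs es where P: "hpath E vs es" "hd vs = u" "last vs = v"
    unfolding hconnected_def by blast
  from path_walk[OF P(1)] show ?thesis unfolding P(2,3) by blast
qed

lemma walk_lower:
  assumes "\<And>a b. hadj E a b \<Longrightarrow> f b \<le> f a + 1"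
  shows "(hadj E ^^ n) u v \<Longrightarrow> f v \<le> f u + n"
proof (induction n arbitrary: v)
  case 0 then show ?case by simp
next
  case (Suc n)
  then obtain w where w: "(hadj E ^^ n) u w" "hadj E w v" by auto
  have "f w \<le> f u + n" by (rule Suc.IH[OF w(1)])
  moreover have "f v \<le> f w + 1" by (rule assms[OF w(2)])
  ultimately show ?case by simp
qed

lemma walk_map:
  assumes "\<And>a b. hadj E a b \<Longrightarrow> hadj E' (f a) (f b)"
  shows "(hadj E ^^ n) u v \<Longrightarrow> (hadj E' ^^ n) (f u) (f v)"
proof (induction n arbitrary: v)
  case 0 then show ?case by simp
next
  case (Suc n)
  then obtain w where w: "(hadj E ^^ n) u w" "hadj E w v" by auto
  have "(hadj E' ^^ n) (f u) (f w)" by (rule Suc.IH[OF w(1)])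
  then show ?case by (rule relpowp_Suc_I[where P="hadj E'", OF _ assms[OF w(2)]])
qed

lemma hyp_edge: "hypergraph V E \<Longrightarrow> e \<in> E \<Longrightarrow> e \<subseteq> V"
  unfolding hypergraph_def by blast

lemma adj_in: "hypergraph V E \<Longrightarrow> hadj E a b \<Longrightarrow> a \<in> V \<and> b \<in> V"
  unfolding hadj_def hypergraph_def by blast

locale glue =
  fixes VH V1 V2 :: "'a set" and EH E1 E2 :: "'a set set" and r1 r2 w1 w2 :: 'a
  assumes H: "hypergraph VH EH" "hconnected VH EH"
    and G1: "hypergraph V1 E1" "hconnected V1 E1" "r1 \<in> V1"
    and G2: "hypergraph V2 E2" "hconnected V2 E2" "r2 \<in> V2"
    and w: "w1 \<in> VH" "w2 \<in> VH"
    and disj: "VH \<inter> V1 = {}" "VH \<inter> V2 = {}" "V1 \<inter> V2 = {}"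
begin

abbreviation "VV \<equiv> glue2_V VH V1 r1 w1 V2 r2 w2"
abbreviation "EE \<equiv> glue2_E EH E1 r1 w1 E2 r2 w2"
abbreviation "s1 \<equiv> subst_root r1 w1"
abbreviation "s2 \<equiv> subst_root r2 w2"
abbreviation "h \<equiv> hdist EH"
abbreviation "d1 \<equiv> hdist E1"
abbreviation "d2 \<equiv> hdist E2"
abbreviation "V1' \<equiv> V1 - {r1}"
abbreviation "V2' \<equiv> V2 - {r2}"

lemma s1_img: "s1 ` V1 = V1' \<union> {w1}"
  using G1(3) unfolding subst_root_def by auto

lemma s2_img: "s2 ` V2 = V2' \<union> {w2}"
  using G2(3) unfolding subst_root_def by auto

lemma VV_eq: "VV = VH \<union> V1' \<union> V2'"
  unfolding glue2_V_def s1_img s2_img using w by auto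

lemma s1_id: "x \<in> V1' \<Longrightarrow> s1 x = x" unfolding subst_root_def by auto
lemma s2_id: "x \<in> V2' \<Longrightarrow> s2 x = x" unfolding subst_root_def by auto
lemma s1_r: "s1 r1 = w1" unfolding subst_root_def by auto
lemma s2_r: "s2 r2 = w2" unfolding subst_root_def by auto

lemma s1_inj: "a \<in> V1 \<Longrightarrow> b \<in> V1 \<Longrightarrow> s1 a = s1 b \<Longrightarrow> a = b"
  using w disj unfolding subst_root_def by (auto split: if_splits)

lemma s2_inj: "a \<in> V2 \<Longrightarrow> b \<in> V2 \<Longrightarrow> s2 a = s2 b \<Longrightarrow> a = b"
  using w disj unfolding subst_root_def by (auto split: if_splits)

lemma adjH: "hadj EH a b \<Longrightarrow> hadj EE a b"
  unfolding hadj_def glue2_E_def by blast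

lemma adj1: "hadj E1 a b \<Longrightarrow> hadj EE (s1 a) (s1 b)"
proof -
  assume "hadj E1 a b"
  then obtain e where e: "e \<in> E1" "a \<in> e" "b \<in> e" "a \<noteq> b" unfolding hadj_def by blast
  have "e \<subseteq> V1" using hyp_edge[OF G1(1) e(1)] .
  then have "s1 a \<noteq> s1 b" using s1_inj e by blast
  moreover have "s1 ` e \<in> EE" unfolding glue2_E_def using e(1) by blast
  ultimately show ?thesis unfolding hadj_def using e by blast
qed

lemma adj2: "hadj E2 a b \<Longrightarrow> hadj EE (s2 a) (s2 b)"
proof -
  assume "hadj E2 a b"
  then obtain e where e: "e \<in> E2" "a \<in> e" "b \<in> e" "a \<noteq> b" unfolding hadj_def by blast
  have "e \<subseteq> V2" using hyp_edge[OF G2(1) e(1)] .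
  then have "s2 a \<noteq> s2 b" using s2_inj e by blast
  moreover have "s2 ` e \<in> EE" unfolding glue2_E_def using e(1) by blast
  ultimately show ?thesis unfolding hadj_def using e by blast
qed

lemma walkH: "(hadj EH ^^ n) a b \<Longrightarrow> (hadj EE ^^ n) a b"
  using walk_map[of EH EE "\<lambda>x. x", OF adjH] by simp

lemma walk1: "(hadj E1 ^^ n) a b \<Longrightarrow> (hadj EE ^^ n) (s1 a) (s1 b)"
  using walk_map[of E1 EE s1, OF adj1] by simp

lemma walk2: "(hadj E2 ^^ n) a b \<Longrightarrow> (hadj EE ^^ n) (s2 a) (s2 b)"
  using walk_map[of E2 EE s2, OF adj2] by simp

lemma cw_gen: "hconnected V E \<Longrightarrow> a \<in> V \<Longrightarrow> b \<in> V \<Longrightarrow> (hadj E ^^ hdist E a b) a b"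
proof -
  assume "hconnected V E" "a \<in> V" "b \<in> V"
  from conn_walk[OF this] obtain n where "(hadj E ^^ n) a b" by blast
  then show ?thesis by (rule hdist_walk)
qed
lemma cwH: "a \<in> VH \<Longrightarrow> b \<in> VH \<Longrightarrow> (hadj EH ^^ h a b) a b"
  by (rule cw_gen[OF H(2)])
lemma cw1: "a \<in> V1 \<Longrightarrow> b \<in> V1 \<Longrightarrow> (hadj E1 ^^ d1 a b) a b"
  by (rule cw_gen[OF G1(2)])
lemma cw2: "a \<in> V2 \<Longrightarrow> b \<in> V2 \<Longrightarrow> (hadj E2 ^^ d2 a b) a b"
  by (rule cw_gen[OF G2(2)])

definition off :: "'a \<Rightarrow> nat" where
  "off p = (if p \<in> V1' then d1 p r1 else if p \<in> V2' then d2 p r2 else 0)"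
definition anc :: "'a \<Rightarrow> 'a" where
  "anc p = (if p \<in> V1' then w1 else if p \<in> V2' then w2 else p)"
definition dl :: "'a \<Rightarrow> 'a \<Rightarrow> nat" where
  "dl p q = (if p \<in> V1' \<and> q \<in> V1' then d1 p q else if p \<in> V2' \<and> q \<in> V2' then d2 p q
             else off p + h (anc p) (anc q) + off q)"

lemma n12: "p \<in> V2' \<Longrightarrow> p \<notin> V1'" using disj by blast
lemma off1: "p \<in> V1' \<Longrightarrow> off p = d1 p r1" by (simp only: off_def if_P if_True if_False)
lemma anc1: "p \<in> V1' \<Longrightarrow> anc p = w1" by (simp only: anc_def if_P if_True if_False)
lemma off2: "p \<in> V2' \<Longrightarrow> off p = d2 p r2"
  by (simp only: off_def if_not_P[OF n12] if_P if_True if_False)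
lemma anc2: "p \<in> V2' \<Longrightarrow> anc p = w2"
  by (simp only: anc_def if_not_P[OF n12] if_P if_True if_False)
lemma off0: "p \<notin> V1' \<Longrightarrow> p \<notin> V2' \<Longrightarrow> off p = 0"
  by (simp only: off_def if_not_P if_True if_False)
lemma anc0: "p \<notin> V1' \<Longrightarrow> p \<notin> V2' \<Longrightarrow> anc p = p"
  by (simp only: anc_def if_not_P if_True if_False)
lemma dl1: "p \<in> V1' \<Longrightarrow> q \<in> V1' \<Longrightarrow> dl p q = d1 p q"
  by (simp only: dl_def if_P conjI if_True if_False)
lemma dl2: "p \<in> V2' \<Longrightarrow> q \<in> V2' \<Longrightarrow> dl p q = d2 p q"
proof -
  assume "p \<in> V2'" "q \<in> V2'"
  then have "\<not> (p \<in> V1' \<and> q \<in> V1')" "p \<in> V2' \<and> q \<in> V2'" using n12 by blast+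
  then show ?thesis by (simp only: dl_def if_not_P if_P if_True if_False)
qed
lemma dl0: "\<not> (p \<in> V1' \<and> q \<in> V1') \<Longrightarrow> \<not> (p \<in> V2' \<and> q \<in> V2') \<Longrightarrow>
    dl p q = off p + h (anc p) (anc q) + off q"
  by (simp only: dl_def if_not_P if_True if_False)

lemma anc_VH: "p \<in> VV \<Longrightarrow> anc p \<in> VH"
  unfolding VV_eq anc_def using w by auto

lemma up: "p \<in> VV \<Longrightarrow> (hadj EE ^^ off p) p (anc p)"
proof -
  assume p: "p \<in> VV"
  show ?thesis
  proof (cases "p \<in> V1'")
    case True
    then have "(hadj EE ^^ d1 p r1) (s1 p) (s1 r1)" using walk1 cw1 G1(3) by blast
    then show ?thesis using True unfolding off_def anc_def by (simp add: s1_id s1_r)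
  next
    case F1: False
    show ?thesis
    proof (cases "p \<in> V2'")
      case True
      then have "(hadj EE ^^ d2 p r2) (s2 p) (s2 r2)" using walk2 cw2 G2(3) by blast
      moreover have "off p = d2 p r2" by (simp only: off_def if_not_P[OF F1] if_P[OF True] if_True if_False)
      moreover have "anc p = w2" by (simp only: anc_def if_not_P[OF F1] if_P[OF True] if_True if_False)
      ultimately show ?thesis using True by (simp add: s2_id s2_r)
    next
      case False
      have "off p = 0" by (simp only: off_def if_not_P[OF F1] if_not_P[OF False] if_True if_False)
      moreover have "anc p = p" by (simp only: anc_def if_not_P[OF F1] if_not_P[OF False] if_True if_False)
      ultimately show ?thesis by simp
    qed
  qed
qed

lemma dl_walk: "p \<in> VV \<Longrightarrow> q \<in> VV \<Longrightarrow> (hadj EE ^^ dl p q) p q"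
proof -
  assume p: "p \<in> VV" and q: "q \<in> VV"
  show ?thesis
  proof (cases "p \<in> V1' \<and> q \<in> V1'")
    case True
    then have "(hadj EE ^^ d1 p q) (s1 p) (s1 q)" using walk1 cw1 by blast
    then show ?thesis using True unfolding dl_def by (simp add: s1_id)
  next
    case F1: False
    show ?thesis
    proof (cases "p \<in> V2' \<and> q \<in> V2'")
      case True
      then have "(hadj EE ^^ d2 p q) (s2 p) (s2 q)" using walk2 cw2 by blast
      then show ?thesis using True by (simp add: s2_id dl2)
    next
      case False
      have a: "(hadj EE ^^ off p) p (anc p)" using up[OF p] .
      have b: "(hadj EE ^^ h (anc p) (anc q)) (anc p) (anc q)"
        using walkH cwH anc_VH p q by blast
      have c: "(hadj EE ^^ off q) (anc q) q" by (rule walk_sym[OF up[OF q]])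
      have "(hadj EE ^^ (off p + h (anc p) (anc q) + off q)) p q"
        using walk_trans[OF walk_trans[OF a b] c] .
      then show ?thesis using dl0[OF F1 False] by simp
    qed
  qed
qed

lemma h_self: "h a a = 0" by (rule hdist_self)
lemma d1_sym: "a \<in> V1 \<Longrightarrow> b \<in> V1 \<Longrightarrow> d1 a b = d1 b a"
  by (rule hdist_sym[OF cw1])
lemma d2_sym: "a \<in> V2 \<Longrightarrow> b \<in> V2 \<Longrightarrow> d2 a b = d2 b a"
  by (rule hdist_sym[OF cw2])
lemma h_sym: "a \<in> VH \<Longrightarrow> b \<in> VH \<Longrightarrow> h a b = h b a"
  by (rule hdist_sym[OF cwH])

lemma notin: "p \<in> VH \<Longrightarrow> p \<notin> V1' \<and> p \<notin> V2'"
  using disj by blast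

lemma w1n: "w1 \<notin> V1'" "w1 \<notin> V2'" using notin w by blast+
lemma w2n: "w2 \<notin> V1'" "w2 \<notin> V2'" using notin w by blast+

lemma dl_H: "p \<in> VV \<Longrightarrow> a \<in> VH \<Longrightarrow> dl p a = off p + h (anc p) a"
proof -
  assume a: "a \<in> VH"
  have n: "a \<notin> V1'" "a \<notin> V2'" using notin[OF a] by blast+
  then have "\<not> (p \<in> V1' \<and> a \<in> V1')" "\<not> (p \<in> V2' \<and> a \<in> V2')" by blast+
  from dl0[OF this] show ?thesis using off0[OF n] anc0[OF n] by simp
qed

lemma dl_1in: "p \<in> V1' \<Longrightarrow> y \<in> V1 \<Longrightarrow> dl p (s1 y) = d1 p y"
proof -
  assume p: "p \<in> V1'" and y: "y \<in> V1"
  show ?thesis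
  proof (cases "y = r1")
    case True
    have "\<not> (p \<in> V1' \<and> w1 \<in> V1')" "\<not> (p \<in> V2' \<and> w1 \<in> V2')" using w1n by blast+
    from dl0[OF this] have "dl p w1 = d1 p r1" using off1[OF p] anc1[OF p] off0[OF w1n] anc0[OF w1n]
      by (simp add: hdist_self)
    then show ?thesis using True s1_r by simp
  next
    case False
    then have y': "y \<in> V1'" using y by blast
    show ?thesis using dl1[OF p y'] s1_id[OF y'] by simp
  qed
qed

lemma dl_1out: "p \<in> VV \<Longrightarrow> p \<notin> V1' \<Longrightarrow> y \<in> V1 \<Longrightarrow> dl p (s1 y) = off p + h (anc p) w1 + d1 y r1"
proof -
  assume p: "p \<in> VV" "p \<notin> V1'" and y: "y \<in> V1"
  show ?thesis
  proof (cases "y = r1")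
    case True
    have "\<not> (p \<in> V1' \<and> w1 \<in> V1')" "\<not> (p \<in> V2' \<and> w1 \<in> V2')" using w1n by blast+
    from dl0[OF this] have "dl p w1 = off p + h (anc p) w1" using off0[OF w1n] anc0[OF w1n] by simp
    then show ?thesis using True s1_r by (simp add: hdist_self)
  next
    case False
    then have y': "y \<in> V1'" "y \<notin> V2'" using y disj by blast+
    have "\<not> (p \<in> V1' \<and> y \<in> V1')" "\<not> (p \<in> V2' \<and> y \<in> V2')" using p y' by blast+
    from dl0[OF this] show ?thesis using s1_id[OF y'(1)] off1[OF y'(1)] anc1[OF y'(1)] by simp
  qed
qed

lemma dl_2in: "p \<in> V2' \<Longrightarrow> y \<in> V2 \<Longrightarrow> dl p (s2 y) = d2 p y"
proof -
  assume p: "p \<in> V2'" and y: "y \<in> V2"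
  show ?thesis
  proof (cases "y = r2")
    case True
    have "\<not> (p \<in> V1' \<and> w2 \<in> V1')" "\<not> (p \<in> V2' \<and> w2 \<in> V2')" using w2n by blast+
    from dl0[OF this] have "dl p w2 = d2 p r2" using off2[OF p] anc2[OF p] off0[OF w2n] anc0[OF w2n]
      by (simp add: hdist_self)
    then show ?thesis using True s2_r by simp
  next
    case False
    then have y': "y \<in> V2'" using y by blast
    show ?thesis using dl2[OF p y'] s2_id[OF y'] by simp
  qed
qed

lemma dl_2out: "p \<in> VV \<Longrightarrow> p \<notin> V2' \<Longrightarrow> y \<in> V2 \<Longrightarrow> dl p (s2 y) = off p + h (anc p) w2 + d2 y r2"
proof -
  assume p: "p \<in> VV" "p \<notin> V2'" and y: "y \<in> V2"
  show ?thesis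
  proof (cases "y = r2")
    case True
    have "\<not> (p \<in> V1' \<and> w2 \<in> V1')" "\<not> (p \<in> V2' \<and> w2 \<in> V2')" using w2n by blast+
    from dl0[OF this] have "dl p w2 = off p + h (anc p) w2" using off0[OF w2n] anc0[OF w2n] by simp
    then show ?thesis using True s2_r by (simp add: hdist_self)
  next
    case False
    then have y': "y \<in> V2'" "y \<notin> V1'" using y disj by blast+
    have "\<not> (p \<in> V1' \<and> y \<in> V1')" "\<not> (p \<in> V2' \<and> y \<in> V2')" using p y' by blast+
    from dl0[OF this] show ?thesis using s2_id[OF y'(1)] off2[OF y'(1)] anc2[OF y'(1)] by simp
  qed
qed

lemma adj_cases:
  assumes "hadj EE a b"
  shows "(\<exists>e\<in>EH. a \<in> e \<and> b \<in> e) \<or>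
         (\<exists>e\<in>E1. \<exists>a0\<in>e. \<exists>b0\<in>e. a = s1 a0 \<and> b = s1 b0) \<or>
         (\<exists>e\<in>E2. \<exists>a0\<in>e. \<exists>b0\<in>e. a = s2 a0 \<and> b = s2 b0)"
  using assms unfolding hadj_def glue2_E_def by blast

lemma dl_lip: "p \<in> VV \<Longrightarrow> hadj EE a b \<Longrightarrow> dl p b \<le> dl p a + 1"
proof -
  assume p: "p \<in> VV" and ab: "hadj EE a b"
  have apH: "anc p \<in> VH" using anc_VH[OF p] .
  from adj_cases[OF ab] show ?thesis
  proof (elim disjE bexE conjE)
    fix e assume e: "e \<in> EH" "a \<in> e" "b \<in> e"
    have ab': "a \<in> VH" "b \<in> VH" using hyp_edge[OF H(1) e(1)] e by auto
    have "h (anc p) b \<le> h (anc p) a + 1" using hdist_lip[OF cwH[OF apH ab'(1)] e(2) e(3) e(1)] .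
    then show ?thesis using dl_H[OF p ab'(1)] dl_H[OF p ab'(2)] by simp
  next
    fix e a0 b0 assume e: "e \<in> E1" "a0 \<in> e" "b0 \<in> e" "a = s1 a0" "b = s1 b0"
    have ab': "a0 \<in> V1" "b0 \<in> V1" using hyp_edge[OF G1(1) e(1)] e by auto
    show ?thesis
    proof (cases "p \<in> V1'")
      case True
      have "d1 p b0 \<le> d1 p a0 + 1" using hdist_lip[OF cw1[of p a0] e(2) e(3) e(1)] True ab' by simp
      then show ?thesis using dl_1in[OF True ab'(1)] dl_1in[OF True ab'(2)] e by simp
    next
      case False
      have "d1 r1 b0 \<le> d1 r1 a0 + 1" using hdist_lip[OF cw1[OF G1(3) ab'(1)] e(2) e(3) e(1)] .
      then have "d1 b0 r1 \<le> d1 a0 r1 + 1" using d1_sym[OF G1(3) ab'(1)] d1_sym[OF G1(3) ab'(2)] by simp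
      then show ?thesis using dl_1out[OF p False ab'(1)] dl_1out[OF p False ab'(2)] e by simp
    qed
  next
    fix e a0 b0 assume e: "e \<in> E2" "a0 \<in> e" "b0 \<in> e" "a = s2 a0" "b = s2 b0"
    have ab': "a0 \<in> V2" "b0 \<in> V2" using hyp_edge[OF G2(1) e(1)] e by auto
    show ?thesis
    proof (cases "p \<in> V2'")
      case True
      have "d2 p b0 \<le> d2 p a0 + 1" using hdist_lip[OF cw2[of p a0] e(2) e(3) e(1)] True ab' by simp
      then show ?thesis using dl_2in[OF True ab'(1)] dl_2in[OF True ab'(2)] e by simp
    next
      case False
      have "d2 r2 b0 \<le> d2 r2 a0 + 1" using hdist_lip[OF cw2[OF G2(3) ab'(1)] e(2) e(3) e(1)] .
      then have "d2 b0 r2 \<le> d2 a0 r2 + 1" using d2_sym[OF G2(3) ab'(1)] d2_sym[OF G2(3) ab'(2)] by simp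
      then show ?thesis using dl_2out[OF p False ab'(1)] dl_2out[OF p False ab'(2)] e by simp
    qed
  qed
qed

lemma dl_self: "dl p p = 0"
proof (cases "p \<in> V1'")
  case True then show ?thesis using dl1[OF True True] by (simp add: hdist_self)
next
  case F1: False
  show ?thesis
  proof (cases "p \<in> V2'")
    case True then show ?thesis using dl2[OF True True] by (simp add: hdist_self)
  next
    case False
    have "\<not> (p \<in> V1' \<and> p \<in> V1')" "\<not> (p \<in> V2' \<and> p \<in> V2')" using F1 False by blast+
    from dl0[OF this] show ?thesis using off0[OF F1 False] anc0[OF F1 False] by (simp add: hdist_self)
  qed
qed

theorem hdist_glue: "p \<in> VV \<Longrightarrow> q \<in> VV \<Longrightarrow> hdist EE p q = dl p q"
proof -
  assume p: "p \<in> VV" and q: "q \<in> VV"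
  have w: "(hadj EE ^^ dl p q) p q" using dl_walk[OF p q] .
  have "hdist EE p q \<le> dl p q" using hdist_le[OF w] .
  moreover have "dl p q \<le> hdist EE p q"
  proof (rule hdist_ge[OF w])
    fix m assume "(hadj EE ^^ m) p q"
    from walk_lower[of EE "dl p", OF dl_lip[OF p] this] show "dl p q \<le> m" by (simp add: dl_self)
  qed
  ultimately show ?thesis by simp
qed

lemma glue_walk: "p \<in> VV \<Longrightarrow> q \<in> VV \<Longrightarrow> \<exists>n. (hadj EE ^^ n) p q"
  using dl_walk by blast

lemma VV_finite: "finite VV"
  using H(1) G1(1) G2(1) unfolding VV_eq hypergraph_def by auto


lemma dl_1H: "p \<in> V1' \<Longrightarrow> q \<in> VH \<Longrightarrow> dl p q = d1 p r1 + h w1 q"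
proof -
  assume p: "p \<in> V1'" and q: "q \<in> VH"
  have n: "q \<notin> V1'" "q \<notin> V2'" using notin[OF q] by blast+
  have "\<not> (p \<in> V1' \<and> q \<in> V1')" "\<not> (p \<in> V2' \<and> q \<in> V2')" using n by blast+
  from dl0[OF this] show ?thesis using off1[OF p] anc1[OF p] off0[OF n] anc0[OF n] by simp
qed

lemma dl_H1: "p \<in> VH \<Longrightarrow> q \<in> V1' \<Longrightarrow> dl p q = h p w1 + d1 q r1"
proof -
  assume q: "q \<in> V1'" and p: "p \<in> VH"
  have n: "p \<notin> V1'" "p \<notin> V2'" using notin[OF p] by blast+
  have "\<not> (p \<in> V1' \<and> q \<in> V1')" "\<not> (p \<in> V2' \<and> q \<in> V2')" using n by blast+
  from dl0[OF this] show ?thesis using off1[OF q] anc1[OF q] off0[OF n] anc0[OF n] by simp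
qed

lemma dl_2H: "p \<in> V2' \<Longrightarrow> q \<in> VH \<Longrightarrow> dl p q = d2 p r2 + h w2 q"
proof -
  assume p: "p \<in> V2'" and q: "q \<in> VH"
  have n: "q \<notin> V1'" "q \<notin> V2'" using notin[OF q] by blast+
  have "\<not> (p \<in> V1' \<and> q \<in> V1')" "\<not> (p \<in> V2' \<and> q \<in> V2')" using n by blast+
  from dl0[OF this] show ?thesis using off2[OF p] anc2[OF p] off0[OF n] anc0[OF n] by simp
qed

lemma dl_H2: "p \<in> VH \<Longrightarrow> q \<in> V2' \<Longrightarrow> dl p q = h p w2 + d2 q r2"
proof -
  assume q: "q \<in> V2'" and p: "p \<in> VH"
  have n: "p \<notin> V1'" "p \<notin> V2'" using notin[OF p] by blast+
  have "\<not> (p \<in> V1' \<and> q \<in> V1')" "\<not> (p \<in> V2' \<and> q \<in> V2')" using n by blast+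
  from dl0[OF this] show ?thesis using off2[OF q] anc2[OF q] off0[OF n] anc0[OF n] by simp
qed

lemma dl_12: "p \<in> V1' \<Longrightarrow> q \<in> V2' \<Longrightarrow> dl p q = d1 p r1 + h w1 w2 + d2 q r2"
proof -
  assume p: "p \<in> V1'" and q: "q \<in> V2'"
  have "\<not> (p \<in> V1' \<and> q \<in> V1')" "\<not> (p \<in> V2' \<and> q \<in> V2')" using n12[OF q] n12 p by blast+
  from dl0[OF this] show ?thesis using off1[OF p] anc1[OF p] off2[OF q] anc2[OF q] by simp
qed

lemma dl_21: "p \<in> V2' \<Longrightarrow> q \<in> V1' \<Longrightarrow> dl p q = d2 p r2 + h w2 w1 + d1 q r1"
proof -
  assume p: "p \<in> V2'" and q: "q \<in> V1'"
  have "\<not> (p \<in> V1' \<and> q \<in> V1')" "\<not> (p \<in> V2' \<and> q \<in> V2')" using n12[OF p] n12 q by blast+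
  from dl0[OF this] show ?thesis using off2[OF p] anc2[OF p] off1[OF q] anc1[OF q] by simp
qed

lemma dl_HH: "p \<in> VH \<Longrightarrow> q \<in> VH \<Longrightarrow> dl p q = h p q"
proof -
  assume p: "p \<in> VH" and q: "q \<in> VH"
  have n: "p \<notin> V1'" "p \<notin> V2'" using notin[OF p] by blast+
  have m: "q \<notin> V1'" "q \<notin> V2'" using notin[OF q] by blast+
  have "\<not> (p \<in> V1' \<and> q \<in> V1')" "\<not> (p \<in> V2' \<and> q \<in> V2')" using n by blast+
  from dl0[OF this] show ?thesis using off0[OF n] anc0[OF n] off0[OF m] anc0[OF m] by simp
qed

lemma hd_1H: "p \<in> V1' \<Longrightarrow> q \<in> VH \<Longrightarrow> hdist EE p q = d1 p r1 + h w1 q"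
  using hdist_glue dl_1H VV_eq by auto
lemma hd_H1: "p \<in> VH \<Longrightarrow> q \<in> V1' \<Longrightarrow> hdist EE p q = h p w1 + d1 q r1"
  using hdist_glue dl_H1 VV_eq by auto
lemma hd_2H: "p \<in> V2' \<Longrightarrow> q \<in> VH \<Longrightarrow> hdist EE p q = d2 p r2 + h w2 q"
  using hdist_glue dl_2H VV_eq by auto
lemma hd_H2: "p \<in> VH \<Longrightarrow> q \<in> V2' \<Longrightarrow> hdist EE p q = h p w2 + d2 q r2"
  using hdist_glue dl_H2 VV_eq by auto
lemma hd_12: "p \<in> V1' \<Longrightarrow> q \<in> V2' \<Longrightarrow> hdist EE p q = d1 p r1 + h w1 w2 + d2 q r2"
  using hdist_glue dl_12 VV_eq by auto
lemma hd_21: "p \<in> V2' \<Longrightarrow> q \<in> V1' \<Longrightarrow> hdist EE p q = d2 p r2 + h w2 w1 + d1 q r1"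
  using hdist_glue dl_21 VV_eq by auto
lemma hd_HH: "p \<in> VH \<Longrightarrow> q \<in> VH \<Longrightarrow> hdist EE p q = h p q"
  using hdist_glue dl_HH VV_eq by auto
lemma hd_11: "p \<in> V1' \<Longrightarrow> q \<in> V1' \<Longrightarrow> hdist EE p q = d1 p q"
  using hdist_glue dl1 VV_eq by auto
lemma hd_22: "p \<in> V2' \<Longrightarrow> q \<in> V2' \<Longrightarrow> hdist EE p q = d2 p q"
  using hdist_glue dl2 VV_eq by auto

lemma hd_sym: "p \<in> VV \<Longrightarrow> q \<in> VV \<Longrightarrow> hdist EE p q = hdist EE q p"
  using hdist_sym[OF dl_walk] by blast

lemma hd_pos: "p \<in> VV \<Longrightarrow> q \<in> VV \<Longrightarrow> p \<noteq> q \<Longrightarrow> 1 \<le> hdist EE p q"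
  using hdist_pos[OF dl_walk] by blast

end

definition eigp :: "'a set \<Rightarrow> ('a \<Rightarrow> 'a \<Rightarrow> real) \<Rightarrow> real \<Rightarrow> ('a \<Rightarrow> real) \<Rightarrow> bool" where
  "eigp V M lam x \<longleftrightarrow> (\<forall>v. v \<notin> V \<longrightarrow> x v = 0) \<and> (\<exists>v\<in>V. x v \<noteq> 0) \<and>
     (\<forall>u\<in>V. (\<Sum>v\<in>V. M u v * x v) = lam * x u)"

definition qf :: "'a set \<Rightarrow> ('a \<Rightarrow> 'a \<Rightarrow> real) \<Rightarrow> ('a \<Rightarrow> real) \<Rightarrow> real" where
  "qf V M x = (\<Sum>u\<in>V. \<Sum>v\<in>V. M u v * x u * x v)"

definition nf :: "'a set \<Rightarrow> ('a \<Rightarrow> real) \<Rightarrow> real" where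
  "nf V x = (\<Sum>u\<in>V. (x u)\<^sup>2)"

lemma finite_eig:
  assumes "finite V"
  shows "finite {lam. \<exists>x. eigp V M lam x}"
proof -
  obtain xs where xs: "set xs = V" "distinct xs" using finite_distinct_list[OF assms] by blast
  define n where "n = length xs"
  define A :: "real mat" where "A = Matrix.mat n n (\<lambda>(i,j). M (xs!i) (xs!j))"
  have A: "A \<in> carrier_mat n n" unfolding A_def by simp
  have bij: "bij_betw ((!) xs) {..<n} V" using xs n_def by (simp add: bij_betw_nth)
  have sumconv: "(\<Sum>j\<in>{0..<n}. f (xs!j)) = (\<Sum>w\<in>V. f w)" for f :: "'a \<Rightarrow> real"
    using sum.reindex_bij_betw[OF bij, of f] by (simp add: atLeast0LessThan)
  have "{lam. \<exists>x. eigp V M lam x} \<subseteq> {k. poly (char_poly A) k = 0}"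
  proof
    fix lam assume "lam \<in> {lam. \<exists>x. eigp V M lam x}"
    then obtain x where x: "eigp V M lam x" by blast
    define v where "v = Matrix.vec n (\<lambda>i. x (xs!i))"
    have "eigenvector A v lam"
      unfolding eigenvector_def
    proof (intro conjI)
      show "v \<in> carrier_vec (dim_row A)" unfolding v_def A_def by simp
      from x obtain w where w: "w \<in> V" "x w \<noteq> 0" unfolding eigp_def by blast
      then obtain i where i: "i < n" "xs ! i = w" using xs n_def by (auto simp: in_set_conv_nth)
      then have "vec_index v i \<noteq> 0" unfolding v_def using w by simp
      then show "v \<noteq> 0\<^sub>v (dim_row A)" using i unfolding A_def by auto
      show "A *\<^sub>v v = lam \<cdot>\<^sub>v v"
      proof (rule eq_vecI)
        show "dim_vec (A *\<^sub>v v) = dim_vec (lam \<cdot>\<^sub>v v)" unfolding A_def v_def by simp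
        fix i assume "i < dim_vec (lam \<cdot>\<^sub>v v)"
        then have i: "i < n" unfolding v_def by simp
        then have xi: "xs ! i \<in> V" using xs n_def by auto
        have "vec_index (A *\<^sub>v v) i = (\<Sum>j\<in>{0..<n}. M (xs!i) (xs!j) * x (xs!j))"
          using i unfolding A_def v_def by (simp add: scalar_prod_def)
        also have "\<dots> = (\<Sum>w\<in>V. M (xs!i) w * x w)" by (rule sumconv)
        also have "\<dots> = lam * x (xs ! i)" using x xi unfolding eigp_def by blast
        also have "\<dots> = vec_index (lam \<cdot>\<^sub>v v) i" using i unfolding v_def by simp
        finally show "vec_index (A *\<^sub>v v) i = vec_index (lam \<cdot>\<^sub>v v) i" .
      qed
    qed
    then have "eigenvalue A lam" unfolding eigenvalue_def by blast
    then show "lam \<in> {k. poly (char_poly A) k = 0}" using eigenvalue_root_char_poly[OF A] by simp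
  qed
  moreover have "char_poly A \<noteq> 0"
  proof
    assume "char_poly A = 0"
    then show False using degree_monic_char_poly[OF A] by simp
  qed
  ultimately show ?thesis using poly_roots_finite finite_subset by blast
qed


lemma qf_eq: "qf V M y = (\<Sum>u\<in>V. y u * (\<Sum>v\<in>V. M u v * y v))"
  unfolding qf_def by (simp add: sum_distrib_left mult_ac)

lemma nf_nonneg: "0 \<le> nf V y"
  unfolding nf_def by (simp add: sum_nonneg)

lemma nf_zero: "finite V \<Longrightarrow> nf V y = 0 \<Longrightarrow> u \<in> V \<Longrightarrow> y u = 0"
  unfolding nf_def using sum_nonneg_eq_0_iff[of V "\<lambda>u. (y u)\<^sup>2"] by simp

lemma qf_cong: "(\<And>v. v \<in> V \<Longrightarrow> x v = y v) \<Longrightarrow> qf V M x = qf V M y"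
  unfolding qf_def by (intro sum.cong refl) auto

lemma nf_cong: "(\<And>v. v \<in> V \<Longrightarrow> x v = y v) \<Longrightarrow> nf V x = nf V y"
  unfolding nf_def by (intro sum.cong refl) auto

locale symmat =
  fixes V :: "'a set" and M :: "'a \<Rightarrow> 'a \<Rightarrow> real"
  assumes fin: "finite V" and ne: "V \<noteq> {}"
    and sym: "\<And>u v. u \<in> V \<Longrightarrow> v \<in> V \<Longrightarrow> M u v = M v u"
    and pos: "\<And>u v. u \<in> V \<Longrightarrow> v \<in> V \<Longrightarrow> u \<noteq> v \<Longrightarrow> M u v > 0"
    and diag: "\<And>u. u \<in> V \<Longrightarrow> M u u \<ge> 0"
begin

lemma nonneg: "u \<in> V \<Longrightarrow> v \<in> V \<Longrightarrow> M u v \<ge> 0"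
  using pos diag by (cases "u = v") (auto intro: less_imp_le)

lemma exist_max:
  obtains x0 where "\<And>y. qf V M y \<le> qf V M x0 * nf V y" "nf V x0 = 1"
proof -
  define T where "T = product_topology (\<lambda>_. euclideanreal) V"
  define B where "B = PiE V (\<lambda>_. {-1..1::real})"
  have cI: "compactin euclideanreal {-1..1::real}" by simp
  have cB: "compactin T B" unfolding T_def B_def
    by (rule iffD2[OF compactin_PiE]) (use cI in blast)
  have proj: "continuous_map T euclideanreal (\<lambda>x. x i)" if "i \<in> V" for i
    unfolding T_def using continuous_map_product_projection[where k=i and I=V and X="\<lambda>_. euclideanreal"] that
    by simp
  have cnf: "continuous_map T euclideanreal (nf V)"
    unfolding nf_def[abs_def]
    by (intro continuous_map_sum continuous_map_real_pow fin proj)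
  have cqf: "continuous_map T euclideanreal (qf V M)"
    unfolding qf_def[abs_def]
    by (intro continuous_map_sum continuous_map_real_mult fin continuous_map_canonical_const proj)
  define S where "S = {x \<in> topspace T. nf V x \<in> {1}}"
  have clS: "closedin T S" unfolding S_def
    by (rule closedin_continuous_map_preimage[OF cnf]) simp
  define K where "K = S \<inter> B"
  have cK: "compactin T K" unfolding K_def by (rule closed_Int_compactin[OF clS cB])
  have "compactin euclideanreal (qf V M ` K)" by (rule image_compactin[OF cK cqf])
  then have cpt: "compact (qf V M ` K)" by simp
  obtain v0 where v0: "v0 \<in> V" using ne by blast
  define e0 where "e0 = restrict (\<lambda>v. if v = v0 then 1 else (0::real)) V"
  have "nf V e0 = 1" unfolding nf_def e0_def using v0 fin
    by (simp add: if_distrib[of "\<lambda>x. x\<^sup>2"] sum.delta cong: if_cong)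
  moreover have "e0 \<in> B" unfolding B_def e0_def by (simp add: restrict_PiE_iff)
  moreover have "e0 \<in> topspace T" unfolding T_def e0_def by (simp add: restrict_PiE_iff)
  ultimately have "e0 \<in> K" unfolding K_def S_def by blast
  then have "qf V M ` K \<noteq> {}" by blast
  from compact_attains_sup[OF cpt this] obtain s where s: "s \<in> qf V M ` K" "\<forall>t\<in>qf V M ` K. t \<le> s"
    by blast
  from s(1) obtain x1 where x1K: "x1 \<in> K" "s = qf V M x1" by blast
  have x1: "x1 \<in> K" "\<And>z. z \<in> K \<Longrightarrow> qf V M z \<le> qf V M x1"
    using x1K s(2) by auto
  have nx1: "nf V x1 = 1" using x1(1) unfolding K_def S_def by auto
  have main: "qf V M y \<le> qf V M x1 * nf V y" for y
    proof (cases "nf V y = 0")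
      case True
      have y0: "y u = 0" if "u \<in> V" for u using nf_zero[OF fin True that] .
      have "qf V M y = 0" unfolding qf_def by (intro sum.neutral ballI) (simp add: y0)
      then show ?thesis using True by simp
    next
      case False
      then have ny: "nf V y > 0" using nf_nonneg[of V y] by simp
      define c where "c = sqrt (nf V y)"
      have c: "c > 0" "c\<^sup>2 = nf V y" unfolding c_def using ny by auto
      define z where "z = restrict (\<lambda>v. y v / c) V"
      have nz: "nf V z = 1"
      proof -
        have "nf V z = (\<Sum>u\<in>V. (y u)\<^sup>2 / c\<^sup>2)" unfolding nf_def z_def
          by (intro sum.cong refl) (simp add: power_divide)
        also have "\<dots> = nf V y / c\<^sup>2" unfolding nf_def by (simp add: sum_divide_distrib)
        finally show ?thesis using c ny by simp
      qed
      have "z \<in> B" unfolding B_def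
      proof (rule PiE_I)
        fix v assume v: "v \<in> V"
        have "(z v)\<^sup>2 \<le> nf V z" unfolding nf_def
          by (rule member_le_sum[OF v _ fin]) simp
        then have "\<bar>z v\<bar> \<le> 1" using nz by (simp add: abs_square_le_1)
        then show "z v \<in> {-1..1}" by auto
      next
        fix v assume "v \<notin> V" then show "z v = undefined" unfolding z_def by simp
      qed
      moreover have "z \<in> topspace T" unfolding T_def z_def by auto
      ultimately have "z \<in> K" using nz unfolding K_def S_def by auto
      then have le: "qf V M z \<le> qf V M x1" by (rule x1(2))
      have "qf V M z = (\<Sum>u\<in>V. \<Sum>v\<in>V. M u v * y u * y v / c\<^sup>2)" unfolding qf_def z_def
        by (intro sum.cong refl) (simp add: power2_eq_square)
      also have "\<dots> = qf V M y / c\<^sup>2" unfolding qf_def by (simp add: sum_divide_distrib)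
      finally have "qf V M y / nf V y \<le> qf V M x1" using le c by simp
      then show ?thesis using ny by (simp add: divide_le_eq)
    qed
  show ?thesis by (rule that[OF main nx1])
qed

lemma rayleigh_eig:
  assumes ray: "\<And>y. qf V M y \<le> lam * nf V y" and qx: "qf V M x = lam * nf V x"
  shows "\<And>u. u \<in> V \<Longrightarrow> (\<Sum>v\<in>V. M u v * x v) = lam * x u"
proof -
  define w where "w u = (\<Sum>v\<in>V. M u v * x v) - lam * x u" for u
  define N where "N = nf V w"
  define c where "c = qf V M w - lam * nf V w"
  have key: "qf V M (\<lambda>u. x u + t * w u) - lam * nf V (\<lambda>u. x u + t * w u) = 2 * t * N + t\<^sup>2 * c" for t
  proof -
    have sw: "(\<Sum>u\<in>V. \<Sum>v\<in>V. M u v * x u * w v) = (\<Sum>u\<in>V. \<Sum>v\<in>V. M u v * w u * x v)"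
    proof -
      have "(\<Sum>u\<in>V. \<Sum>v\<in>V. M u v * x u * w v) = (\<Sum>v\<in>V. \<Sum>u\<in>V. M u v * x u * w v)"
        by (rule sum.swap)
      also have "\<dots> = (\<Sum>v\<in>V. \<Sum>u\<in>V. M v u * w v * x u)"
        by (intro sum.cong refl) (subst sym, auto simp: mult_ac)
      finally show ?thesis .
    qed
    have B: "(\<Sum>u\<in>V. \<Sum>v\<in>V. M u v * w u * x v) = (\<Sum>u\<in>V. w u * (\<Sum>v\<in>V. M u v * x v))"
      by (simp add: sum_distrib_left mult_ac)
    have q: "qf V M (\<lambda>u. x u + t * w u) = qf V M x + 2 * t * (\<Sum>u\<in>V. w u * (\<Sum>v\<in>V. M u v * x v))
        + t\<^sup>2 * qf V M w"
    proof -
      have "qf V M (\<lambda>u. x u + t * w u) = (\<Sum>u\<in>V. \<Sum>v\<in>V. M u v * x u * x v + t * (M u v * x u * w v)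
          + t * (M u v * w u * x v) + t\<^sup>2 * (M u v * w u * w v))"
        unfolding qf_def by (intro sum.cong refl) (simp add: algebra_simps power2_eq_square)
      also have "\<dots> = qf V M x + t * (\<Sum>u\<in>V. \<Sum>v\<in>V. M u v * x u * w v)
          + t * (\<Sum>u\<in>V. \<Sum>v\<in>V. M u v * w u * x v) + t\<^sup>2 * qf V M w"
        unfolding qf_def by (simp add: sum.distrib sum_distrib_left)
      finally show ?thesis using sw B by simp
    qed
    have n: "nf V (\<lambda>u. x u + t * w u) = nf V x + 2 * t * (\<Sum>u\<in>V. x u * w u) + t\<^sup>2 * nf V w"
    proof -
      have "nf V (\<lambda>u. x u + t * w u) = (\<Sum>u\<in>V. (x u)\<^sup>2 + 2 * t * (x u * w u) + t\<^sup>2 * (w u)\<^sup>2)"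
        unfolding nf_def by (intro sum.cong refl) (simp add: algebra_simps power2_eq_square)
      then show ?thesis unfolding nf_def by (simp add: sum.distrib sum_distrib_left)
    qed
    have "(\<Sum>u\<in>V. w u * (\<Sum>v\<in>V. M u v * x v)) - lam * (\<Sum>u\<in>V. x u * w u) = N"
    proof -
      have "(\<Sum>u\<in>V. w u * (\<Sum>v\<in>V. M u v * x v)) - lam * (\<Sum>u\<in>V. x u * w u)
          = (\<Sum>u\<in>V. w u * (\<Sum>v\<in>V. M u v * x v) - lam * (x u * w u))"
        by (simp add: sum_subtractf sum_distrib_left)
      also have "\<dots> = (\<Sum>u\<in>V. (w u)\<^sup>2)"
        by (intro sum.cong refl) (simp add: w_def algebra_simps power2_eq_square)
      finally show ?thesis unfolding N_def nf_def .
    qed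
    then show ?thesis using q n qx unfolding c_def by (simp add: algebra_simps)
  qed
  have N0: "N \<ge> 0" unfolding N_def by (rule nf_nonneg)
  have "N = 0"
  proof (rule ccontr)
    assume "N \<noteq> 0"
    then have Np: "N > 0" using N0 by simp
    define t where "t = N / (\<bar>c\<bar> + 1)"
    have tp: "t > 0" unfolding t_def using Np by simp
    have "t * \<bar>c\<bar> \<le> N" unfolding t_def using Np
      by (simp add: field_simps)
    then have "t\<^sup>2 * \<bar>c\<bar> \<le> t * N" using tp by (simp add: power2_eq_square mult.assoc mult_left_mono)
    moreover have "- (t\<^sup>2 * \<bar>c\<bar>) \<le> t\<^sup>2 * c" using mult_left_mono[of "-\<bar>c\<bar>" c "t\<^sup>2"] by simp
    moreover have "t * N > 0" using tp Np by simp
    ultimately have "2 * t * N + t\<^sup>2 * c > 0" by linarith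
    moreover have "2 * t * N + t\<^sup>2 * c \<le> 0" using key[of t] ray[of "\<lambda>u. x u + t * w u"] by simp
    ultimately show False by simp
  qed
  fix u assume "u \<in> V"
  then have "w u = 0" using nf_zero[OF fin] \<open>N = 0\<close> unfolding N_def by blast
  then show "(\<Sum>v\<in>V. M u v * x v) = lam * x u" unfolding w_def by simp
qed

lemma eig_qf: "eigp V M l y \<Longrightarrow> qf V M y = l * nf V y"
proof -
  assume e: "eigp V M l y"
  have "qf V M y = (\<Sum>u\<in>V. y u * (l * y u))" unfolding qf_eq
    using e unfolding eigp_def by (intro sum.cong refl) simp
  also have "\<dots> = l * nf V y" unfolding nf_def by (simp add: sum_distrib_left power2_eq_square mult_ac)
  finally show ?thesis .
qed

lemma eig_nf_pos: "eigp V M l y \<Longrightarrow> nf V y > 0"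
proof -
  assume e: "eigp V M l y"
  then obtain v where v: "v \<in> V" "y v \<noteq> 0" unfolding eigp_def by blast
  have "nf V y \<noteq> 0"
  proof
    assume "nf V y = 0"
    then show False using nf_zero[OF fin _ v(1)] v(2) by blast
  qed
  then show ?thesis using nf_nonneg[of V y] by simp
qed

theorem spectral:
  obtains lam p where "Max {l. \<exists>x. eigp V M l x} = lam" "eigp V M lam p" "\<forall>v\<in>V. p v > 0"
    "nf V p = 1" "\<And>y. qf V M y \<le> lam * nf V y"
    "\<And>y. eigp V M lam y \<Longrightarrow> \<forall>v\<in>V. y v > 0 \<Longrightarrow> nf V y = 1 \<Longrightarrow> y = p"
proof -
  obtain x0 where ray0: "\<And>y. qf V M y \<le> qf V M x0 * nf V y" and nx0: "nf V x0 = 1"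
    using exist_max by blast
  define lam where "lam = qf V M x0"
  have ray: "qf V M y \<le> lam * nf V y" for y using ray0 unfolding lam_def .
  define p where "p v = (if v \<in> V then \<bar>x0 v\<bar> else 0)" for v
  have np: "nf V p = 1" unfolding p_def nf_def using nx0 unfolding nf_def
    by (simp cong: sum.cong)
  have "qf V M x0 \<le> qf V M p" unfolding qf_def
  proof (intro sum_mono)
    fix u v assume u: "u \<in> V" and v: "v \<in> V"
    have "M u v * x0 u * x0 v \<le> \<bar>M u v * x0 u * x0 v\<bar>" by simp
    also have "\<dots> = M u v * p u * p v" using nonneg[OF u v] u v unfolding p_def by (simp add: abs_mult)
    finally show "M u v * x0 u * x0 v \<le> M u v * p u * p v" .
  qed
  moreover have "qf V M p \<le> lam" using ray[of p] np by simp
  ultimately have qp: "qf V M p = lam * nf V p" using np unfolding lam_def by simp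
  have eqp: "(\<Sum>v\<in>V. M u v * p v) = lam * p u" if "u \<in> V" for u
    using rayleigh_eig[OF ray qp that] .
  have p0: "p v \<ge> 0" for v unfolding p_def by simp
  have pout: "p v = 0" if "v \<notin> V" for v using that unfolding p_def by simp
  have ppos: "\<forall>v\<in>V. p v > 0"
  proof
    fix u assume u: "u \<in> V"
    show "p u > 0"
    proof (rule ccontr)
      assume "\<not> p u > 0"
      then have pu: "p u = 0" using p0[of u] by simp
      have "(\<Sum>v\<in>V. M u v * p v) = 0" using eqp[OF u] pu by simp
      moreover have "\<forall>v\<in>V. M u v * p v \<ge> 0"
      proof
        fix v assume v: "v \<in> V"
        show "M u v * p v \<ge> 0" using nonneg[OF u v] p0[of v] by (rule mult_nonneg_nonneg)
      qed
      ultimately have z: "\<forall>v\<in>V. M u v * p v = 0"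
        using sum_nonneg_eq_0_iff[OF fin, of "\<lambda>v. M u v * p v"] by auto
      have "\<forall>v\<in>V. p v = 0"
      proof
        fix v assume v: "v \<in> V"
        show "p v = 0"
        proof (cases "v = u")
          case True then show ?thesis using pu by simp
        next
          case False
          then have "M u v > 0" using pos[OF u v] by simp
          moreover have "M u v * p v = 0" using z v by blast
          ultimately show ?thesis by simp
        qed
      qed
      then have "\<forall>v\<in>V. (p v)\<^sup>2 = 0" by simp
      then have "nf V p = 0" unfolding nf_def by (rule sum.neutral)
      then show False using np by simp
    qed
  qed
  have eigpp: "eigp V M lam p"
    unfolding eigp_def
  proof (intro conjI)
    show "\<forall>v. v \<notin> V \<longrightarrow> p v = 0" using pout by blast
    obtain v where "v \<in> V" using ne by blast
    then show "\<exists>v\<in>V. p v \<noteq> 0" using ppos by force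
    show "\<forall>u\<in>V. (\<Sum>v\<in>V. M u v * p v) = lam * p u" using eqp by blast
  qed
  have lamin: "lam \<in> {l. \<exists>x. eigp V M l x}" using eigpp by blast
  have maxeq: "Max {l. \<exists>x. eigp V M l x} = lam"
  proof (rule Max_eqI[OF finite_eig[OF fin]])
    fix l assume "l \<in> {l. \<exists>x. eigp V M l x}"
    then obtain y where y: "eigp V M l y" by blast
    have "l * nf V y \<le> lam * nf V y" using eig_qf[OF y] ray[of y] by simp
    then show "l \<le> lam" using eig_nf_pos[OF y] by simp
  qed (rule lamin)
  have uniq: "y = p" if ye: "eigp V M lam y" and ypos: "\<forall>v\<in>V. y v > 0" and ny: "nf V y = 1" for y
  proof -
    define R where "R = (\<lambda>v. y v / p v) ` V"
    have Rf: "finite R" "R \<noteq> {}" unfolding R_def using fin ne by auto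
    define c where "c = Min R"
    obtain u0 where u0: "u0 \<in> V" "c = y u0 / p u0" using Min_in[OF Rf] unfolding c_def R_def by auto
    have cle: "c \<le> y v / p v" if "v \<in> V" for v
    proof -
      have "y v / p v \<in> R" unfolding R_def using that by blast
      then show ?thesis unfolding c_def by (rule Min_le[OF Rf(1)])
    qed
    define z where "z v = y v - c * p v" for v
    have z0: "z v \<ge> 0" if "v \<in> V" for v
    proof -
      have "c * p v \<le> y v" using cle[OF that] ppos that by (simp add: le_divide_eq)
      then show ?thesis unfolding z_def by simp
    qed
    have pu0: "p u0 > 0" using ppos u0(1) by blast
    have zu0: "z u0 = 0" unfolding z_def u0(2) using pu0 by simp
    have ey: "(\<Sum>v\<in>V. M u v * y v) = lam * y u" if "u \<in> V" for u using ye that unfolding eigp_def by blast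
    have "(\<Sum>v\<in>V. M u0 v * z v) = (\<Sum>v\<in>V. M u0 v * y v) - c * (\<Sum>v\<in>V. M u0 v * p v)"
      unfolding z_def by (simp add: algebra_simps sum_subtractf sum_distrib_left)
    also have "\<dots> = lam * z u0" using ey[OF u0(1)] eqp[OF u0(1)] unfolding z_def by (simp add: algebra_simps)
    finally have "(\<Sum>v\<in>V. M u0 v * z v) = 0" using zu0 by simp
    moreover have "\<forall>v\<in>V. M u0 v * z v \<ge> 0"
    proof
      fix v assume v: "v \<in> V"
      show "M u0 v * z v \<ge> 0" using nonneg[OF u0(1) v] z0[OF v] by (rule mult_nonneg_nonneg)
    qed
    ultimately have zm: "\<forall>v\<in>V. M u0 v * z v = 0"
      using sum_nonneg_eq_0_iff[OF fin, of "\<lambda>v. M u0 v * z v"] by auto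
    have zz: "\<forall>v\<in>V. z v = 0"
    proof
      fix v assume v: "v \<in> V"
      show "z v = 0"
      proof (cases "v = u0")
        case True then show ?thesis using zu0 by simp
      next
        case False
        then have "M u0 v > 0" using pos[OF u0(1) v] by simp
        moreover have "M u0 v * z v = 0" using zm v by blast
        ultimately show ?thesis by simp
      qed
    qed
    then have yc: "y v = c * p v" if "v \<in> V" for v using that unfolding z_def by simp
    have "nf V y = c\<^sup>2 * nf V p" unfolding nf_def
      by (simp add: yc sum_distrib_left power_mult_distrib cong: sum.cong)
    then have "c\<^sup>2 = 1" using ny np by simp
    moreover have "c > 0" using u0 ypos ppos by simp
    ultimately have "c = 1" by (simp add: power2_eq_1_iff)
    show "y = p"
    proof
      fix v show "y v = p v"
      proof (cases "v \<in> V")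
        case True then show ?thesis using yc \<open>c = 1\<close> by simp
      next
        case False then show ?thesis using ye pout unfolding eigp_def by simp
      qed
    qed
  qed
  show ?thesis by (rule that[OF maxeq eigpp ppos np ray uniq])
qed

end

lemma dist_eigenpair_eq: "dist_eigenpair V E = eigp V (\<lambda>u v. real (hdist E u v))"
  unfolding dist_eigenpair_def[abs_def] eigp_def[abs_def] by simp

lemma dist_rho_eq: "dist_rho V E = Max {l. \<exists>x. eigp V (\<lambda>u v. real (hdist E u v)) l x}"
  unfolding dist_rho_def dist_eigenpair_eq ..

lemma perron_eq: "perron V E = (THE x. eigp V (\<lambda>u v. real (hdist E u v)) (dist_rho V E) x
    \<and> (\<forall>v\<in>V. x v > 0) \<and> nf V x = 1)"
  unfolding perron_def dist_eigenpair_eq nf_def ..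

context glue
begin

lemma spec:
  obtains lam x where "dist_rho VV EE = lam" "perron VV EE = x" "\<forall>v\<in>VV. x v > 0" "nf VV x = 1"
    "\<forall>u\<in>VV. (\<Sum>v\<in>VV. real (hdist EE u v) * x v) = lam * x u"
    "\<And>y. qf VV (\<lambda>u v. real (hdist EE u v)) y \<le> lam * nf VV y"
proof -
  interpret S: symmat VV "\<lambda>u v. real (hdist EE u v)"
  proof
    show "finite VV" by (rule VV_finite)
    show "VV \<noteq> {}" using w(1) VV_eq by blast
    show "\<And>u v. u \<in> VV \<Longrightarrow> v \<in> VV \<Longrightarrow> real (hdist EE u v) = real (hdist EE v u)"
      using hd_sym by simp
    show "\<And>u v. u \<in> VV \<Longrightarrow> v \<in> VV \<Longrightarrow> u \<noteq> v \<Longrightarrow> 0 < real (hdist EE u v)"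
    proof -
      fix u v assume "u \<in> VV" "v \<in> VV" "u \<noteq> v"
      from hd_pos[OF this] show "0 < real (hdist EE u v)" by simp
    qed
    show "\<And>u. u \<in> VV \<Longrightarrow> 0 \<le> real (hdist EE u u)" by simp
  qed
  obtain lam p where sp: "Max {l. \<exists>x. eigp VV (\<lambda>u v. real (hdist EE u v)) l x} = lam"
    "eigp VV (\<lambda>u v. real (hdist EE u v)) lam p" "\<forall>v\<in>VV. p v > 0"
    "nf VV p = 1" "\<And>y. qf VV (\<lambda>u v. real (hdist EE u v)) y \<le> lam * nf VV y"
    "\<And>y. eigp VV (\<lambda>u v. real (hdist EE u v)) lam y \<Longrightarrow> \<forall>v\<in>VV. y v > 0 \<Longrightarrow> nf VV y = 1 \<Longrightarrow> y = p"
    using S.spectral by blast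
  have rho: "dist_rho VV EE = lam" unfolding dist_rho_eq using sp(1) .
  have per: "perron VV EE = p" unfolding perron_eq rho
  proof (rule the_equality)
    show "eigp VV (\<lambda>u v. real (hdist EE u v)) lam p \<and> (\<forall>v\<in>VV. 0 < p v) \<and> nf VV p = 1"
      using sp by blast
    fix y assume "eigp VV (\<lambda>u v. real (hdist EE u v)) lam y \<and> (\<forall>v\<in>VV. 0 < y v) \<and> nf VV y = 1"
    then show "y = p" using sp(6) by blast
  qed
  have "\<forall>u\<in>VV. (\<Sum>v\<in>VV. real (hdist EE u v) * p v) = lam * p u"
    using sp(2) unfolding eigp_def by blast
  then show ?thesis using that[OF rho per sp(3) sp(4)] sp(5) by blast
qed

end

lemma qf_diff_bound:
  fixes N M :: "'a \<Rightarrow> 'a \<Rightarrow> real"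
  assumes fin: "finite W" and x0: "\<And>p. p \<in> W \<Longrightarrow> x p \<ge> 0"
    and pw: "\<And>p q. p \<in> W \<Longrightarrow> q \<in> W \<Longrightarrow> N p q - M p q \<ge> c * (a p * b q + b p * a q)"
  shows "qf W N x - qf W M x \<ge> 2 * c * (\<Sum>p\<in>W. a p * x p) * (\<Sum>p\<in>W. b p * x p)"
proof -
  have "2 * c * (\<Sum>p\<in>W. a p * x p) * (\<Sum>p\<in>W. b p * x p)
      = c * ((\<Sum>p\<in>W. a p * x p) * (\<Sum>q\<in>W. b q * x q) + (\<Sum>p\<in>W. b p * x p) * (\<Sum>q\<in>W. a q * x q))"
    by (simp add: algebra_simps)
  also have "\<dots> = c * (\<Sum>p\<in>W. \<Sum>q\<in>W. (a p * x p) * (b q * x q)) + c * (\<Sum>p\<in>W. \<Sum>q\<in>W. (b p * x p) * (a q * x q))"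
    by (simp only: sum_product distrib_left)
  also have "\<dots> = (\<Sum>p\<in>W. \<Sum>q\<in>W. c * ((a p * x p) * (b q * x q)) + c * ((b p * x p) * (a q * x q)))"
    by (simp add: sum.distrib sum_distrib_left)
  also have "\<dots> = (\<Sum>p\<in>W. \<Sum>q\<in>W. c * (a p * b q + b p * a q) * (x p * x q))"
    by (intro sum.cong refl) (simp add: algebra_simps)
  also have "\<dots> \<le> (\<Sum>p\<in>W. \<Sum>q\<in>W. (N p q - M p q) * (x p * x q))"
  proof (intro sum_mono)
    fix p q assume p: "p \<in> W" and q: "q \<in> W"
    show "c * (a p * b q + b p * a q) * (x p * x q) \<le> (N p q - M p q) * (x p * x q)"
      by (rule mult_right_mono[OF pw[OF p q]]) (simp add: x0 p q)
  qed
  also have "\<dots> = qf W N x - qf W M x"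
    unfolding qf_def by (simp add: sum_subtractf[symmetric] algebra_simps)
  finally show ?thesis .
qed

lemma sum_ind:
  fixes x :: "'a \<Rightarrow> real"
  shows "finite W \<Longrightarrow> X \<subseteq> W \<Longrightarrow> (\<Sum>p\<in>W. (if p \<in> X then 1 else 0) * x p) = (\<Sum>p\<in>X. x p)"
proof -
  assume "finite W" "X \<subseteq> W"
  have "(\<Sum>p\<in>W. (if p \<in> X then 1 else 0) * x p) = (\<Sum>p\<in>W. if p \<in> X then x p else 0)"
    by (intro sum.cong refl) simp
  also have "\<dots> = sum x (W \<inter> X)" using sum.inter_restrict[OF \<open>finite W\<close>, of x X] by simp
  also have "W \<inter> X = X" using \<open>X \<subseteq> W\<close> by blast
  finally show ?thesis .
qed

lemma sum_del:
  fixes x :: "'a \<Rightarrow> real"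
  shows "finite W \<Longrightarrow> u \<in> W \<Longrightarrow> (\<Sum>p\<in>W. (if p = u then c else 0) * x p) = c * x u"
proof -
  assume "finite W" "u \<in> W"
  have "(\<Sum>p\<in>W. (if p = u then c else 0) * x p) = (\<Sum>p\<in>W. if p = u then c * x u else 0)"
    by (intro sum.cong refl) simp
  also have "\<dots> = c * x u" using \<open>finite W\<close> \<open>u \<in> W\<close> by (simp add: sum.delta')
  finally show ?thesis .
qed

lemma cw_top: "hconnected V E \<Longrightarrow> a \<in> V \<Longrightarrow> b \<in> V \<Longrightarrow> (hadj E ^^ hdist E a b) a b"
proof -
  assume "hconnected V E" "a \<in> V" "b \<in> V"
  from conn_walk[OF this] obtain n where "(hadj E ^^ n) a b" by blast
  then show ?thesis by (rule hdist_walk)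
qed

lemma twin_le:
  assumes H: "hypergraph VH EH" "hconnected VH EH"
    and uv: "u \<in> VH" "v \<in> VH" and deg: "hdeg EH u = 1" and e0: "e0 \<in> EH" "u \<in> e0" "v \<in> e0"
    and q: "q \<in> VH" "q \<noteq> u"
  shows "hdist EH v q \<le> hdist EH u q"
proof -
  have fin: "finite {e\<in>EH. u \<in> e}" using deg unfolding hdeg_def by (intro card_ge_0_finite) simp
  have "e0 \<in> {e\<in>EH. u \<in> e}" using e0 by blast
  then have one: "{e\<in>EH. u \<in> e} = {e0}" using deg unfolding hdeg_def
    by (metis card_1_singletonE singletonD)
  have w: "(hadj EH ^^ hdist EH u q) u q" using cw_top[OF H(2) uv(1) q(1)] .
  obtain m where m: "hdist EH u q = Suc m"
    using hdist_pos[OF w q(2)[symmetric]] by (cases "hdist EH u q") auto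
  with w have "(hadj EH ^^ Suc m) u q" by simp
  then obtain p where p: "hadj EH u p" "(hadj EH ^^ m) p q" by (rule relpowp_Suc_E2)
  from p(1) obtain e where e: "e \<in> EH" "u \<in> e" "p \<in> e" "u \<noteq> p" unfolding hadj_def by blast
  then have "e \<in> {e\<in>EH. u \<in> e}" by blast
  then have "e = e0" using one by blast
  then have pe: "p \<in> e0" using e by simp
  show ?thesis
  proof (cases "p = v")
    case True
    then have "hdist EH v q \<le> m" using hdist_le[OF p(2)] by simp
    then show ?thesis using m by simp
  next
    case False
    then have "hadj EH v p" using e0 pe unfolding hadj_def by blast
    then have "(hadj EH ^^ Suc m) v q" by (rule relpowp_Suc_I2[where P="hadj EH", OF _ p(2)])
    then show ?thesis using hdist_le m by metis
  qed
qed

lemma nonroot: "hypergraph V E \<Longrightarrow> E \<noteq> {} \<Longrightarrow> \<exists>y. y \<in> V \<and> y \<noteq> r"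
proof -
  assume hg: "hypergraph V E" and ne: "E \<noteq> {}"
  then obtain e where e: "e \<in> E" by blast
  then have sub: "e \<subseteq> V" and c: "card e \<ge> 2" using hg unfolding hypergraph_def by auto
  show ?thesis
  proof (rule ccontr)
    assume "\<not> ?thesis"
    then have "e \<subseteq> {r}" using sub by blast
    then have "card e \<le> card {r}" by (intro card_mono) auto
    then show False using c by simp
  qed
qed


lemma split9:
  assumes "p \<in> X \<union> Y \<union> Z" "q \<in> X \<union> Y \<union> Z"
    "p \<in> X \<Longrightarrow> q \<in> X \<Longrightarrow> P" "p \<in> X \<Longrightarrow> q \<in> Y \<Longrightarrow> P" "p \<in> X \<Longrightarrow> q \<in> Z \<Longrightarrow> P"
    "p \<in> Y \<Longrightarrow> q \<in> X \<Longrightarrow> P" "p \<in> Y \<Longrightarrow> q \<in> Y \<Longrightarrow> P" "p \<in> Y \<Longrightarrow> q \<in> Z \<Longrightarrow> P"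
    "p \<in> Z \<Longrightarrow> q \<in> X \<Longrightarrow> P" "p \<in> Z \<Longrightarrow> q \<in> Y \<Longrightarrow> P" "p \<in> Z \<Longrightarrow> q \<in> Z \<Longrightarrow> P"
  shows P
  using assms by blast

lemma qf_swap:
  assumes bij: "bij_betw s W W" and inv: "\<And>p. s (s p) = p"
  shows "qf W M (\<lambda>p. x (s p)) = qf W (\<lambda>p q. M (s p) (s q)) x"
proof -
  have "qf W M (\<lambda>p. x (s p)) = (\<Sum>p\<in>W. (\<lambda>p. \<Sum>q\<in>W. M p q * x (s p) * x (s q)) p)"
    unfolding qf_def by simp
  also have "\<dots> = (\<Sum>p\<in>W. (\<lambda>p. \<Sum>q\<in>W. M p q * x (s p) * x (s q)) (s p))"
    by (rule sum.reindex_bij_betw[OF bij, symmetric])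
  also have "\<dots> = (\<Sum>p\<in>W. \<Sum>q\<in>W. M (s p) q * x p * x (s q))" by (simp add: inv)
  also have "\<dots> = (\<Sum>p\<in>W. \<Sum>q\<in>W. (\<lambda>q. M (s p) q * x p * x (s q)) (s q))"
  proof (rule sum.cong[OF refl])
    fix p assume "p \<in> W"
    show "(\<Sum>q\<in>W. M (s p) q * x p * x (s q)) = (\<Sum>q\<in>W. (\<lambda>q. M (s p) q * x p * x (s q)) (s q))"
      by (rule sum.reindex_bij_betw[OF bij, symmetric])
  qed
  also have "\<dots> = qf W (\<lambda>p q. M (s p) (s q)) x" unfolding qf_def by (simp add: inv)
  finally show ?thesis .
qed

lemma nf_swap:
  assumes bij: "bij_betw s W W"
  shows "nf W (\<lambda>p. x (s p)) = nf W x"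
  unfolding nf_def using sum.reindex_bij_betw[OF bij, of "\<lambda>p. (x p)\<^sup>2"] by simp

theorem lemma4:
  fixes VH V1 V2 :: "'a set" and EH E1 E2 :: "'a set set" and u1 u2 r1 r2 :: 'a
  assumes H: "hypergraph VH EH" "hconnected VH EH"
    and u: "u1 \<in> VH" "u2 \<in> VH" "u1 \<noteq> u2"
    and G1: "hypergraph V1 E1" "hconnected V1 E1" "r1 \<in> V1" "E1 \<noteq> {}"
    and G2: "hypergraph V2 E2" "hconnected V2 E2" "r2 \<in> V2" "E2 \<noteq> {}"
    and disj: "VH \<inter> V1 = {}" "VH \<inter> V2 = {}" "V1 \<inter> V2 = {}"
    and cond: "(hdeg EH u1 = 1 \<and> hdeg EH u2 = 1 \<and> hdist EH u1 u2 = 1) \<or>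
               sigma (glue2_V VH V1 r1 u1 V2 r2 u1) (glue2_E EH E1 r1 u1 E2 r2 u1) (V1 - {r1})
                 + perron (glue2_V VH V1 r1 u1 V2 r2 u1) (glue2_E EH E1 r1 u1 E2 r2 u1) u1
               \<ge> sigma (glue2_V VH V1 r1 u1 V2 r2 u1) (glue2_E EH E1 r1 u1 E2 r2 u1) VH"
  shows "dist_rho (glue2_V VH V1 r1 u1 V2 r2 u2) (glue2_E EH E1 r1 u1 E2 r2 u2)
         > dist_rho (glue2_V VH V1 r1 u1 V2 r2 u1) (glue2_E EH E1 r1 u1 E2 r2 u1)"
proof -
  interpret A: glue VH V1 V2 EH E1 E2 r1 r2 u1 u1
    by unfold_locales (use H G1 G2 u disj in blast)+
  interpret B: glue VH V1 V2 EH E1 E2 r1 r2 u1 u2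
    by unfold_locales (use H G1 G2 u disj in blast)+
  define W where "W = VH \<union> (V1 - {r1}) \<union> (V2 - {r2})"
  have WA: "glue2_V VH V1 r1 u1 V2 r2 u1 = W" unfolding W_def by (rule A.VV_eq)
  have WB: "glue2_V VH V1 r1 u1 V2 r2 u2 = W" unfolding W_def by (rule B.VV_eq)
  have finW: "finite W" using A.VV_finite WA by simp
  define M1 where "M1 p q = real (hdist (glue2_E EH E1 r1 u1 E2 r2 u1) p q)" for p q
  define M2 where "M2 p q = real (hdist (glue2_E EH E1 r1 u1 E2 r2 u2) p q)" for p q
  obtain lam1 x where rA: "dist_rho (glue2_V VH V1 r1 u1 V2 r2 u1) (glue2_E EH E1 r1 u1 E2 r2 u1) = lam1"
    and pA: "perron (glue2_V VH V1 r1 u1 V2 r2 u1) (glue2_E EH E1 r1 u1 E2 r2 u1) = x"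
    and xpos': "\<forall>v\<in>glue2_V VH V1 r1 u1 V2 r2 u1. x v > 0"
    and nx': "nf (glue2_V VH V1 r1 u1 V2 r2 u1) x = 1"
    and eqA': "\<forall>u\<in>glue2_V VH V1 r1 u1 V2 r2 u1.
       (\<Sum>v\<in>glue2_V VH V1 r1 u1 V2 r2 u1. real (hdist (glue2_E EH E1 r1 u1 E2 r2 u1) u v) * x v) = lam1 * x u"
    and "\<And>y. qf (glue2_V VH V1 r1 u1 V2 r2 u1) (\<lambda>u v. real (hdist (glue2_E EH E1 r1 u1 E2 r2 u1) u v)) y
        \<le> lam1 * nf (glue2_V VH V1 r1 u1 V2 r2 u1) y"
    by (rule A.spec) blast
  obtain lam2 x2 where rB: "dist_rho (glue2_V VH V1 r1 u1 V2 r2 u2) (glue2_E EH E1 r1 u1 E2 r2 u2) = lam2"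
    and "perron (glue2_V VH V1 r1 u1 V2 r2 u2) (glue2_E EH E1 r1 u1 E2 r2 u2) = x2"
    and "\<forall>v\<in>glue2_V VH V1 r1 u1 V2 r2 u2. x2 v > 0"
    and "nf (glue2_V VH V1 r1 u1 V2 r2 u2) x2 = 1"
    and "\<forall>u\<in>glue2_V VH V1 r1 u1 V2 r2 u2.
       (\<Sum>v\<in>glue2_V VH V1 r1 u1 V2 r2 u2. real (hdist (glue2_E EH E1 r1 u1 E2 r2 u2) u v) * x2 v) = lam2 * x2 u"
    and rayB': "\<And>y. qf (glue2_V VH V1 r1 u1 V2 r2 u2) (\<lambda>u v. real (hdist (glue2_E EH E1 r1 u1 E2 r2 u2) u v)) y
        \<le> lam2 * nf (glue2_V VH V1 r1 u1 V2 r2 u2) y"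
    by (rule B.spec) blast
  have xpos: "\<And>v. v \<in> W \<Longrightarrow> x v > 0" using xpos' WA by simp
  have x0: "\<And>v. v \<in> W \<Longrightarrow> x v \<ge> 0" using xpos by (simp add: less_imp_le)
  have nx: "nf W x = 1" using nx' WA by simp
  have eqA: "\<And>u. u \<in> W \<Longrightarrow> (\<Sum>v\<in>W. M1 u v * x v) = lam1 * x u" using eqA' WA unfolding M1_def by simp
  have rayB: "\<And>y. qf W M2 y \<le> lam2 * nf W y"
  proof -
    fix y
    have "M2 = (\<lambda>u v. real (hdist (glue2_E EH E1 r1 u1 E2 r2 u2) u v))" unfolding M2_def by (intro ext) simp
    then show "qf W M2 y \<le> lam2 * nf W y" using rayB'[of y] WB by simp
  qed
  have Q1: "qf W M1 x = lam1"
  proof -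
    have "qf W M1 x = (\<Sum>u\<in>W. x u * (lam1 * x u))" unfolding qf_eq using eqA by (intro sum.cong refl) simp
    also have "\<dots> = lam1 * nf W x" unfolding nf_def by (simp add: sum_distrib_left power2_eq_square mult_ac)
    finally show ?thesis using nx by simp
  qed
  have Q2x: "qf W M2 x \<le> lam2" using rayB[of x] nx by simp
  let ?h = "hdist EH"
  define t where "t = ?h u1 u2"
  have uW: "u1 \<in> W" "u2 \<in> W" using u unfolding W_def by blast+
  have hself: "\<And>a. ?h a a = 0" by (rule hdist_self)
  have hsym: "\<And>a b. a \<in> VH \<Longrightarrow> b \<in> VH \<Longrightarrow> ?h a b = ?h b a" by (rule A.h_sym)
  have t21: "?h u2 u1 = t" unfolding t_def using hsym u by simp
  have tpos: "t \<ge> 1" unfolding t_def using hdist_pos[OF A.cwH[OF u(1) u(2)] u(3)] .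
  have tri1: "\<And>p. p \<in> VH \<Longrightarrow> ?h p u1 \<le> ?h p u2 + t"
    using hdist_triangle[OF A.cwH A.cwH] u t21 by metis
  have tri2: "\<And>q. q \<in> VH \<Longrightarrow> ?h u1 q \<le> t + ?h u2 q"
    using hdist_triangle[OF A.cwH A.cwH] u unfolding t_def by metis
  define S1 where "S1 = (\<Sum>v\<in>V1 - {r1}. x v)"
  define S2 where "S2 = (\<Sum>v\<in>V2 - {r2}. x v)"
  define SH where "SH = (\<Sum>v\<in>VH. x v)"
  have sub: "VH \<subseteq> W" "V1 - {r1} \<subseteq> W" "V2 - {r2} \<subseteq> W" unfolding W_def by blast+
  have S1pos: "S1 > 0"
  proof -
    obtain y where y: "y \<in> V1" "y \<noteq> r1" using nonroot[OF G1(1) G1(4)] by blast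
    have "finite (V1 - {r1})" using finite_subset[OF sub(2) finW] .
    moreover have "V1 - {r1} \<noteq> {}" using y by blast
    ultimately show ?thesis unfolding S1_def using xpos sub(2) by (intro sum_pos) blast+
  qed
  have S2pos: "S2 > 0"
  proof -
    obtain y where y: "y \<in> V2" "y \<noteq> r2" using nonroot[OF G2(1) G2(4)] by blast
    have "finite (V2 - {r2})" using finite_subset[OF sub(3) finW] .
    moreover have "V2 - {r2} \<noteq> {}" using y by blast
    ultimately show ?thesis unfolding S2_def using xpos sub(3) by (intro sum_pos) blast+
  qed
  have mH: "\<And>p. p \<in> VH \<Longrightarrow> p \<notin> V1 - {r1} \<and> p \<notin> V2 - {r2}" using disj by blast
  have m1: "\<And>p. p \<in> V1 - {r1} \<Longrightarrow> p \<notin> VH \<and> p \<notin> V2 - {r2} \<and> p \<noteq> u1 \<and> p \<noteq> u2" using disj u by blast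
  have m2: "\<And>p. p \<in> V2 - {r2} \<Longrightarrow> p \<notin> VH \<and> p \<notin> V1 - {r1} \<and> p \<noteq> u1 \<and> p \<noteq> u2" using disj u by blast
  have pW: "\<And>p. p \<in> W \<Longrightarrow> p \<in> VH \<union> (V1 - {r1}) \<union> (V2 - {r2})" unfolding W_def .
  have ind: "\<And>X. X \<subseteq> W \<Longrightarrow> (\<Sum>p\<in>W. (if p \<in> X then 1 else 0) * x p) = (\<Sum>p\<in>X. x p)"
    by (rule sum_ind[OF finW])
  have del: "\<And>u c. u \<in> W \<Longrightarrow> (\<Sum>p\<in>W. (if p = u then c else 0) * x p) = c * x u"
    by (rule sum_del[OF finW])
  define i1 where "i1 p = (if p \<in> V1 - {r1} then 1 else (0::real))" for p
  define i2 where "i2 p = (if p \<in> V2 - {r2} then 1 else (0::real))" for p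
  define iH where "iH p = (if p \<in> VH then 1 else (0::real))" for p
  define du1 where "du1 p = (if p = u1 then 1 else (0::real))" for p
  define du2 where "du2 p = (if p = u2 then 1 else (0::real))" for p
  have i1H: "i1 p = 0" if "p \<in> VH" for p unfolding i1_def by (rule if_not_P) (use mH[OF that] in blast)
  have i11: "i1 p = 1" if "p \<in> V1 - {r1}" for p unfolding i1_def by (rule if_P[OF that])
  have i12: "i1 p = 0" if "p \<in> V2 - {r2}" for p unfolding i1_def by (rule if_not_P) (use m2[OF that] in blast)
  have i2H: "i2 p = 0" if "p \<in> VH" for p unfolding i2_def by (rule if_not_P) (use mH[OF that] in blast)
  have i21: "i2 p = 0" if "p \<in> V1 - {r1}" for p unfolding i2_def by (rule if_not_P) (use m1[OF that] in blast)
  have i22: "i2 p = 1" if "p \<in> V2 - {r2}" for p unfolding i2_def by (rule if_P[OF that])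
  have iHH: "iH p = 1" if "p \<in> VH" for p unfolding iH_def by (rule if_P[OF that])
  have iH1: "iH p = 0" if "p \<in> V1 - {r1}" for p unfolding iH_def by (rule if_not_P) (use m1[OF that] in blast)
  have iH2: "iH p = 0" if "p \<in> V2 - {r2}" for p unfolding iH_def by (rule if_not_P) (use m2[OF that] in blast)
  have du1ne: "du1 p = 0" if "p \<noteq> u1" for p unfolding du1_def by (rule if_not_P[OF that])
  have du2ne: "du2 p = 0" if "p \<noteq> u2" for p unfolding du2_def by (rule if_not_P[OF that])
  have du1u1: "du1 u1 = 1" unfolding du1_def by simp
  have du2u2: "du2 u2 = 1" unfolding du2_def by simp
  have du1u2: "du1 u2 = 0" using du1ne u(3) by simp
  have du2u1: "du2 u1 = 0" using du2ne u(3) by simp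
  have du1_1: "du1 p = 0" if "p \<in> V1 - {r1}" for p using du1ne m1[OF that] by blast
  have du1_2: "du1 p = 0" if "p \<in> V2 - {r2}" for p using du1ne m2[OF that] by blast
  have du2_1: "du2 p = 0" if "p \<in> V1 - {r1}" for p using du2ne m1[OF that] by blast
  have du2_2: "du2 p = 0" if "p \<in> V2 - {r2}" for p using du2ne m2[OF that] by blast
  have si1: "(\<Sum>p\<in>W. i1 p * x p) = S1" unfolding i1_def S1_def by (rule ind[OF sub(2)])
  have si2: "(\<Sum>p\<in>W. i2 p * x p) = S2" unfolding i2_def S2_def by (rule ind[OF sub(3)])
  have siH: "(\<Sum>p\<in>W. iH p * x p) = SH" unfolding iH_def SH_def by (rule ind[OF sub(1)])
  have sdu1: "(\<Sum>p\<in>W. du1 p * x p) = x u1" unfolding du1_def using del[OF uW(1), of 1] by simp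
  have sdu2: "(\<Sum>p\<in>W. du2 p * x p) = x u2" unfolding du2_def using del[OF uW(2), of 1] by simp
  have xu1: "x u1 > 0" using xpos uW by simp
  show ?thesis unfolding rA rB
  proof -
    consider (c1) "hdeg EH u1 = 1" "hdeg EH u2 = 1" "?h u1 u2 = 1"
      | (c2) "S1 + x u1 \<ge> SH"
    proof -
      have "(hdeg EH u1 = 1 \<and> hdeg EH u2 = 1 \<and> ?h u1 u2 = 1) \<or> S1 + x u1 \<ge> SH"
        using cond unfolding sigma_def pA S1_def SH_def .
      then show ?thesis using that by blast
    qed
    then show "lam2 > lam1"
    proof cases
      case c2
      define a where "a p = i1 p + 2 * du1 p - iH p" for p
      have pw: "M2 p q - M1 p q \<ge> real t * (a p * i2 q + i2 p * a q)" if p: "p \<in> W" and q: "q \<in> W" for p q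
      proof (rule split9[OF pW[OF p] pW[OF q]])
        assume pp: "p \<in> VH" and qq: "q \<in> VH"
        have v: "M1 p q = real (?h p q)" "M2 p q = real (?h p q)"
          unfolding M1_def M2_def using A.hd_HH[OF pp qq] B.hd_HH[OF pp qq] by simp_all
        show ?thesis unfolding v using i2H[OF pp] i2H[OF qq] by simp
      next
        assume pp: "p \<in> VH" and qq: "q \<in> V1 - {r1}"
        have v: "M1 p q = M2 p q"
          unfolding M1_def M2_def using A.hd_H1[OF pp qq] B.hd_H1[OF pp qq] by simp
        show ?thesis unfolding v using i2H[OF pp] i21[OF qq] by simp
      next
        assume pp: "p \<in> VH" and qq: "q \<in> V2 - {r2}"
        have e: "M2 p q - M1 p q = real (?h p u2) - real (?h p u1)"
          using A.hd_H2[OF pp qq] B.hd_H2[OF pp qq] unfolding M1_def M2_def by simp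
        have r: "real t * (a p * i2 q + i2 p * a q) = real t * (2 * du1 p - 1)"
          unfolding a_def using i1H[OF pp] iHH[OF pp] i2H[OF pp] i22[OF qq] by simp
        show ?thesis
        proof (cases "p = u1")
          case True then show ?thesis unfolding e r using hself du1u1 t_def by simp
        next
          case False then show ?thesis unfolding e r using du1ne[OF False] tri1[OF pp] by simp
        qed
      next
        assume pp: "p \<in> V1 - {r1}" and qq: "q \<in> VH"
        have v: "M1 p q = M2 p q"
          unfolding M1_def M2_def using A.hd_1H[OF pp qq] B.hd_1H[OF pp qq] by simp
        show ?thesis unfolding v using i21[OF pp] i2H[OF qq] by simp
      next
        assume pp: "p \<in> V1 - {r1}" and qq: "q \<in> V1 - {r1}"
        have v: "M1 p q = M2 p q"
          unfolding M1_def M2_def using A.hd_11[OF pp qq] B.hd_11[OF pp qq] by simp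
        show ?thesis unfolding v using i21[OF pp] i21[OF qq] by simp
      next
        assume pp: "p \<in> V1 - {r1}" and qq: "q \<in> V2 - {r2}"
        have e: "M2 p q - M1 p q = real t"
          using A.hd_12[OF pp qq] B.hd_12[OF pp qq] hself unfolding M1_def M2_def t_def by simp
        have r: "a p = 1" "a q = 0"
          unfolding a_def using i11[OF pp] du1_1[OF pp] iH1[OF pp] i12[OF qq] du1_2[OF qq] iH2[OF qq] by simp_all
        show ?thesis unfolding e using r i21[OF pp] i22[OF qq] by simp
      next
        assume pp: "p \<in> V2 - {r2}" and qq: "q \<in> VH"
        have e: "M2 p q - M1 p q = real (?h u2 q) - real (?h u1 q)"
          using A.hd_2H[OF pp qq] B.hd_2H[OF pp qq] unfolding M1_def M2_def by simp
        have r: "real t * (a p * i2 q + i2 p * a q) = real t * (2 * du1 q - 1)"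
          unfolding a_def using i1H[OF qq] iHH[OF qq] i2H[OF qq] i22[OF pp] i12[OF pp] du1_2[OF pp] iH2[OF pp]
          by simp
        show ?thesis
        proof (cases "q = u1")
          case True then show ?thesis unfolding e r using hself du1u1 t21 by simp
        next
          case False then show ?thesis unfolding e r using du1ne[OF False] tri2[OF qq] by simp
        qed
      next
        assume pp: "p \<in> V2 - {r2}" and qq: "q \<in> V1 - {r1}"
        have e: "M2 p q - M1 p q = real t"
          using A.hd_21[OF pp qq] B.hd_21[OF pp qq] hself t21 unfolding M1_def M2_def by simp
        have r: "a p = 0" "a q = 1"
          unfolding a_def using i11[OF qq] du1_1[OF qq] iH1[OF qq] i12[OF pp] du1_2[OF pp] iH2[OF pp] by simp_all
        show ?thesis unfolding e using r i21[OF qq] i22[OF pp] by simp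
      next
        assume pp: "p \<in> V2 - {r2}" and qq: "q \<in> V2 - {r2}"
        have v: "M1 p q = M2 p q"
          unfolding M1_def M2_def using A.hd_22[OF pp qq] B.hd_22[OF pp qq] by simp
        have r: "a p = 0" "a q = 0"
          unfolding a_def using i12[OF pp] du1_2[OF pp] iH2[OF pp] i12[OF qq] du1_2[OF qq] iH2[OF qq] by simp_all
        show ?thesis unfolding v using r by simp
      qed
      have bnd: "qf W M2 x - qf W M1 x \<ge> 2 * real t * (\<Sum>p\<in>W. a p * x p) * (\<Sum>p\<in>W. i2 p * x p)"
        by (rule qf_diff_bound[OF finW x0 pw])
      have sa: "(\<Sum>p\<in>W. a p * x p) = S1 + 2 * x u1 - SH"
      proof -
        have "(\<Sum>p\<in>W. a p * x p) = (\<Sum>p\<in>W. i1 p * x p) + 2 * (\<Sum>p\<in>W. du1 p * x p) - (\<Sum>p\<in>W. iH p * x p)"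
          unfolding a_def by (simp add: algebra_simps sum.distrib sum_subtractf sum_distrib_left)
        then show ?thesis using si1 sdu1 siH by simp
      qed
      have "lam2 - lam1 \<ge> 2 * real t * (S1 + 2 * x u1 - SH) * S2" using bnd si2 sa Q1 Q2x by simp
      moreover have ge: "S1 + 2 * x u1 - SH \<ge> x u1" using c2 by simp
      moreover have "2 * real t * (S1 + 2 * x u1 - SH) * S2 \<ge> 2 * real t * x u1 * S2"
        by (intro mult_right_mono mult_left_mono) (use ge S2pos in auto)
      ultimately have "lam2 - lam1 \<ge> 2 * real t * x u1 * S2" by linarith
      moreover have "2 * real t * x u1 * S2 > 0" using tpos xu1 S2pos by simp
      ultimately show ?thesis by linarith
    next
      case c1
      have "(hadj EH ^^ 1) u1 u2" using A.cwH[OF u(1) u(2)] c1(3) by simp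
      then have "hadj EH u1 u2" by auto
      then obtain e0 where e0: "e0 \<in> EH" "u1 \<in> e0" "u2 \<in> e0" unfolding hadj_def by blast
      have twin: "?h u2 q = ?h u1 q" if q: "q \<in> VH" "q \<noteq> u1" "q \<noteq> u2" for q
      proof -
        have "?h u2 q \<le> ?h u1 q" by (rule twin_le[OF H u(1) u(2) c1(1) e0 q(1) q(2)])
        moreover have "?h u1 q \<le> ?h u2 q" by (rule twin_le[OF H u(2) u(1) c1(2) e0(1) e0(3) e0(2) q(1) q(3)])
        ultimately show ?thesis by simp
      qed
      have twinr: "?h q u2 = ?h q u1" if q: "q \<in> VH" "q \<noteq> u1" "q \<noteq> u2" for q
        using twin[OF q] hsym[OF q(1) u(1)] hsym[OF q(1) u(2)] by simp
      have h12: "?h u1 u2 = 1" using c1(3) .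
      have h21: "?h u2 u1 = 1" using t21 c1(3) unfolding t_def by simp
      have h11: "?h u1 u1 = 0" "?h u2 u2 = 0" using hself by auto
      \<comment> \<open>first test vector: x itself\<close>
      define a1 where "a1 p = i1 p + du1 p - du2 p" for p
      have pw1: "M2 p q - M1 p q \<ge> 1 * (a1 p * i2 q + i2 p * a1 q)" if p: "p \<in> W" and q: "q \<in> W" for p q
      proof (rule split9[OF pW[OF p] pW[OF q]])
        assume pp: "p \<in> VH" and qq: "q \<in> VH"
        have v: "M1 p q = M2 p q"
          unfolding M1_def M2_def using A.hd_HH[OF pp qq] B.hd_HH[OF pp qq] by simp
        show ?thesis unfolding v using i2H[OF pp] i2H[OF qq] by simp
      next
        assume pp: "p \<in> VH" and qq: "q \<in> V1 - {r1}"
        have v: "M1 p q = M2 p q"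
          unfolding M1_def M2_def using A.hd_H1[OF pp qq] B.hd_H1[OF pp qq] by simp
        show ?thesis unfolding v using i2H[OF pp] i21[OF qq] by simp
      next
        assume pp: "p \<in> VH" and qq: "q \<in> V2 - {r2}"
        have e: "M2 p q - M1 p q = real (?h p u2) - real (?h p u1)"
          using A.hd_H2[OF pp qq] B.hd_H2[OF pp qq] unfolding M1_def M2_def by simp
        have r: "1 * (a1 p * i2 q + i2 p * a1 q) = du1 p - du2 p"
          unfolding a1_def using i1H[OF pp] i2H[OF pp] i22[OF qq] by simp
        show ?thesis
        proof (cases "p = u1")
          case True then show ?thesis unfolding e r using h11 h12 du1u1 du2u1 by simp
        next
          case F: False
          show ?thesis
          proof (cases "p = u2")
            case True then show ?thesis unfolding e r using h11 h21 du1u2 du2u2 by simp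
          next
            case False then show ?thesis unfolding e r using twinr[OF pp F False] du1ne[OF F] du2ne[OF False] by simp
          qed
        qed
      next
        assume pp: "p \<in> V1 - {r1}" and qq: "q \<in> VH"
        have v: "M1 p q = M2 p q"
          unfolding M1_def M2_def using A.hd_1H[OF pp qq] B.hd_1H[OF pp qq] by simp
        show ?thesis unfolding v using i21[OF pp] i2H[OF qq] by simp
      next
        assume pp: "p \<in> V1 - {r1}" and qq: "q \<in> V1 - {r1}"
        have v: "M1 p q = M2 p q"
          unfolding M1_def M2_def using A.hd_11[OF pp qq] B.hd_11[OF pp qq] by simp
        show ?thesis unfolding v using i21[OF pp] i21[OF qq] by simp
      next
        assume pp: "p \<in> V1 - {r1}" and qq: "q \<in> V2 - {r2}"
        have e: "M2 p q - M1 p q = 1"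
          using A.hd_12[OF pp qq] B.hd_12[OF pp qq] h11 h12 unfolding M1_def M2_def by simp
        have r: "a1 p = 1"
          unfolding a1_def using i11[OF pp] du1_1[OF pp] du2_1[OF pp] by simp
        show ?thesis unfolding e using r i21[OF pp] i22[OF qq] by simp
      next
        assume pp: "p \<in> V2 - {r2}" and qq: "q \<in> VH"
        have e: "M2 p q - M1 p q = real (?h u2 q) - real (?h u1 q)"
          using A.hd_2H[OF pp qq] B.hd_2H[OF pp qq] unfolding M1_def M2_def by simp
        have r: "1 * (a1 p * i2 q + i2 p * a1 q) = du1 q - du2 q"
          unfolding a1_def using i1H[OF qq] i2H[OF qq] i22[OF pp] by simp
        show ?thesis
        proof (cases "q = u1")
          case True then show ?thesis unfolding e r using h11 h21 du1u1 du2u1 by simp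
        next
          case F: False
          show ?thesis
          proof (cases "q = u2")
            case True then show ?thesis unfolding e r using h11 h12 du1u2 du2u2 by simp
          next
            case False then show ?thesis unfolding e r using twin[OF qq F False] du1ne[OF F] du2ne[OF False] by simp
          qed
        qed
      next
        assume pp: "p \<in> V2 - {r2}" and qq: "q \<in> V1 - {r1}"
        have e: "M2 p q - M1 p q = 1"
          using A.hd_21[OF pp qq] B.hd_21[OF pp qq] h11 h21 unfolding M1_def M2_def by simp
        have r: "a1 q = 1"
          unfolding a1_def using i11[OF qq] du1_1[OF qq] du2_1[OF qq] by simp
        show ?thesis unfolding e using r i21[OF qq] i22[OF pp] by simp
      next
        assume pp: "p \<in> V2 - {r2}" and qq: "q \<in> V2 - {r2}"
        have v: "M1 p q = M2 p q"
          unfolding M1_def M2_def using A.hd_22[OF pp qq] B.hd_22[OF pp qq] by simp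
        have r: "a1 p = 0" "a1 q = 0"
          unfolding a1_def using i12[OF pp] du1_2[OF pp] du2_2[OF pp] i12[OF qq] du1_2[OF qq] du2_2[OF qq]
          by simp_all
        show ?thesis unfolding v using r by simp
      qed
      have bnd1: "qf W M2 x - qf W M1 x \<ge> 2 * 1 * (\<Sum>p\<in>W. a1 p * x p) * (\<Sum>p\<in>W. i2 p * x p)"
        by (rule qf_diff_bound[OF finW x0 pw1])
      have sa1: "(\<Sum>p\<in>W. a1 p * x p) = S1 + x u1 - x u2"
      proof -
        have "(\<Sum>p\<in>W. a1 p * x p) = (\<Sum>p\<in>W. i1 p * x p) + (\<Sum>p\<in>W. du1 p * x p) - (\<Sum>p\<in>W. du2 p * x p)"
          unfolding a1_def by (simp add: algebra_simps sum.distrib sum_subtractf)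
        then show ?thesis using si1 sdu1 sdu2 by simp
      qed
      have F1: "lam2 - lam1 \<ge> 2 * (S1 + x u1 - x u2) * S2" using bnd1 si2 sa1 Q1 Q2x by simp
      \<comment> \<open>second test vector: x with the entries at u1 and u2 swapped\<close>
      define sw where "sw p = (if p = u1 then u2 else if p = u2 then u1 else p)" for p
      have swu1: "sw u1 = u2" unfolding sw_def by simp
      have swu2: "sw u2 = u1" unfolding sw_def using u(3) by simp
      have swo: "sw p = p" if "p \<noteq> u1" "p \<noteq> u2" for p unfolding sw_def using that by simp
      have swsw: "\<And>p. sw (sw p) = p" unfolding sw_def using u(3) by auto
      have swW: "\<And>p. p \<in> W \<Longrightarrow> sw p \<in> W" unfolding sw_def using uW by auto
      have swH: "\<And>p. p \<in> VH \<Longrightarrow> sw p \<in> VH" unfolding sw_def using u by auto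
      have sw1: "sw p = p" if "p \<in> V1 - {r1}" for p using swo m1[OF that] by blast
      have sw2: "sw p = p" if "p \<in> V2 - {r2}" for p using swo m2[OF that] by blast
      have bij: "bij_betw sw W W"
        by (rule bij_betw_byWitness[where f'=sw]) (use swsw swW in auto)
      define M2s where "M2s p q = M2 (sw p) (sw q)" for p q
      have Q2s: "qf W M2s x \<le> lam2"
      proof -
        have "qf W M2s x = qf W M2 (\<lambda>p. x (sw p))" unfolding M2s_def
          by (rule qf_swap[OF bij swsw, symmetric])
        also have "\<dots> \<le> lam2 * nf W (\<lambda>p. x (sw p))" by (rule rayB)
        also have "nf W (\<lambda>p. x (sw p)) = 1" using nf_swap[OF bij] nx by simp
        finally show ?thesis by simp
      qed
      define a2 where "a2 p = i2 p + du1 p - du2 p" for p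
      have hswp: "?h (sw p) q = ?h p q" if pp: "p \<in> VH" and qq: "q \<in> VH" and qn: "q \<noteq> u1" "q \<noteq> u2" for p q
      proof (cases "p = u1")
        case True then show ?thesis using swu1 twin[OF qq qn] by simp
      next
        case F: False
        show ?thesis
        proof (cases "p = u2")
          case True then show ?thesis using swu2 twin[OF qq qn] by simp
        next
          case False then show ?thesis using swo[OF F False] by simp
        qed
      qed
      have hsw: "?h (sw p) (sw q) = ?h p q" if pp: "p \<in> VH" and qq: "q \<in> VH" for p q
      proof (cases "q = u1")
        case True
        then have "?h (sw p) (sw q) = ?h (sw q) (sw p)" "?h p q = ?h q p"
          using hsym swH pp qq by auto
        moreover have "?h (sw q) (sw p) = ?h q p"
        proof (cases "p = u1")
          case True then show ?thesis using \<open>q = u1\<close> hself by simp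
        next
          case F: False
          show ?thesis
          proof (cases "p = u2")
            case True then show ?thesis using \<open>q = u1\<close> swu1 swu2 h12 h21 by simp
          next
            case False then show ?thesis using \<open>q = u1\<close> swu1 swo[OF F False] hswp[OF u(2) pp F False]
              hswp[OF u(1) pp F False] swu2 by simp
          qed
        qed
        ultimately show ?thesis by simp
      next
        case F: False
        show ?thesis
        proof (cases "q = u2")
          case True
          then have "?h (sw p) (sw q) = ?h (sw q) (sw p)" "?h p q = ?h q p"
            using hsym swH pp qq by auto
          moreover have "?h (sw q) (sw p) = ?h q p"
          proof (cases "p = u1")
            case True then show ?thesis using \<open>q = u2\<close> swu1 swu2 h12 h21 by simp
          next
            case F2: False
            show ?thesis
            proof (cases "p = u2")
              case True then show ?thesis using \<open>q = u2\<close> hself by simp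
            next
              case False then show ?thesis using \<open>q = u2\<close> swu2 swo[OF F2 False] twin[OF pp F2 False] by simp
            qed
          qed
          ultimately show ?thesis by simp
        next
          case False
          then show ?thesis using swo[OF F False] hswp[OF pp qq F False] by simp
        qed
      qed
      have pw2: "M2s p q - M1 p q \<ge> 1 * (a2 p * i1 q + i1 p * a2 q)" if p: "p \<in> W" and q: "q \<in> W" for p q
      proof (rule split9[OF pW[OF p] pW[OF q]])
        assume pp: "p \<in> VH" and qq: "q \<in> VH"
        have v: "M1 p q = M2s p q"
          unfolding M1_def M2s_def M2_def using A.hd_HH[OF pp qq] B.hd_HH[OF swH[OF pp] swH[OF qq]] hsw[OF pp qq]
          by simp
        show ?thesis unfolding v using i1H[OF pp] i1H[OF qq] by simp
      next
        assume pp: "p \<in> VH" and qq: "q \<in> V1 - {r1}"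
        have e: "M2s p q - M1 p q = real (?h (sw p) u1) - real (?h p u1)"
          using A.hd_H1[OF pp qq] B.hd_H1[OF swH[OF pp] qq] sw1[OF qq] unfolding M1_def M2s_def M2_def by simp
        have r: "1 * (a2 p * i1 q + i1 p * a2 q) = du1 p - du2 p"
          unfolding a2_def using i2H[OF pp] i1H[OF pp] i11[OF qq] by simp
        show ?thesis
        proof (cases "p = u1")
          case True then show ?thesis unfolding e r using swu1 h11 h21 du1u1 du2u1 by simp
        next
          case F: False
          show ?thesis
          proof (cases "p = u2")
            case True then show ?thesis unfolding e r using swu2 h11 h21 du1u2 du2u2 by simp
          next
            case False then show ?thesis unfolding e r using swo[OF F False] du1ne[OF F] du2ne[OF False] by simp
          qed
        qed
      next
        assume pp: "p \<in> VH" and qq: "q \<in> V2 - {r2}"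
        have e: "M2s p q - M1 p q = real (?h (sw p) u2) - real (?h p u1)"
          using A.hd_H2[OF pp qq] B.hd_H2[OF swH[OF pp] qq] sw2[OF qq] unfolding M1_def M2s_def M2_def by simp
        have r: "1 * (a2 p * i1 q + i1 p * a2 q) = 0"
          using i1H[OF pp] i12[OF qq] by simp
        show ?thesis
        proof (cases "p = u1")
          case True then show ?thesis unfolding e r using swu1 h11 by simp
        next
          case F: False
          show ?thesis
          proof (cases "p = u2")
            case True then show ?thesis unfolding e r using swu2 h12 h21 by simp
          next
            case False then show ?thesis unfolding e r using swo[OF F False] twinr[OF pp F False] by simp
          qed
        qed
      next
        assume pp: "p \<in> V1 - {r1}" and qq: "q \<in> VH"
        have e: "M2s p q - M1 p q = real (?h u1 (sw q)) - real (?h u1 q)"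
          using A.hd_1H[OF pp qq] B.hd_1H[OF pp swH[OF qq]] sw1[OF pp] unfolding M1_def M2s_def M2_def by simp
        have r: "1 * (a2 p * i1 q + i1 p * a2 q) = du1 q - du2 q"
          unfolding a2_def using i2H[OF qq] i1H[OF qq] i11[OF pp] by simp
        show ?thesis
        proof (cases "q = u1")
          case True then show ?thesis unfolding e r using swu1 h11 h12 du1u1 du2u1 by simp
        next
          case F: False
          show ?thesis
          proof (cases "q = u2")
            case True then show ?thesis unfolding e r using swu2 h11 h12 du1u2 du2u2 by simp
          next
            case False then show ?thesis unfolding e r using swo[OF F False] du1ne[OF F] du2ne[OF False] by simp
          qed
        qed
      next
        assume pp: "p \<in> V1 - {r1}" and qq: "q \<in> V1 - {r1}"
        have v: "M1 p q = M2s p q"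
          unfolding M1_def M2s_def M2_def using A.hd_11[OF pp qq] B.hd_11[OF pp qq] sw1[OF pp] sw1[OF qq] by simp
        have r: "a2 p = 0" "a2 q = 0"
          unfolding a2_def using i21[OF pp] du1_1[OF pp] du2_1[OF pp] i21[OF qq] du1_1[OF qq] du2_1[OF qq]
          by simp_all
        show ?thesis unfolding v using r by simp
      next
        assume pp: "p \<in> V1 - {r1}" and qq: "q \<in> V2 - {r2}"
        have e: "M2s p q - M1 p q = 1"
          using A.hd_12[OF pp qq] B.hd_12[OF pp qq] sw1[OF pp] sw2[OF qq] h11 h12 unfolding M1_def M2s_def M2_def by simp
        have r: "a2 q = 1"
          unfolding a2_def using i22[OF qq] du1_2[OF qq] du2_2[OF qq] by simp
        show ?thesis unfolding e using r i11[OF pp] i12[OF qq] by simp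
      next
        assume pp: "p \<in> V2 - {r2}" and qq: "q \<in> VH"
        have e: "M2s p q - M1 p q = real (?h u2 (sw q)) - real (?h u1 q)"
          using A.hd_2H[OF pp qq] B.hd_2H[OF pp swH[OF qq]] sw2[OF pp] unfolding M1_def M2s_def M2_def by simp
        have r: "1 * (a2 p * i1 q + i1 p * a2 q) = 0"
          using i1H[OF qq] i12[OF pp] by simp
        show ?thesis
        proof (cases "q = u1")
          case True then show ?thesis unfolding e r using swu1 h11 by simp
        next
          case F: False
          show ?thesis
          proof (cases "q = u2")
            case True then show ?thesis unfolding e r using swu2 h12 h21 by simp
          next
            case False then show ?thesis unfolding e r using swo[OF F False] twin[OF qq F False] by simp
          qed
        qed
      next
        assume pp: "p \<in> V2 - {r2}" and qq: "q \<in> V1 - {r1}"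
        have e: "M2s p q - M1 p q = 1"
          using A.hd_21[OF pp qq] B.hd_21[OF pp qq] sw2[OF pp] sw1[OF qq] h11 h21 unfolding M1_def M2s_def M2_def by simp
        have r: "a2 p = 1"
          unfolding a2_def using i22[OF pp] du1_2[OF pp] du2_2[OF pp] by simp
        show ?thesis unfolding e using r i11[OF qq] i12[OF pp] by simp
      next
        assume pp: "p \<in> V2 - {r2}" and qq: "q \<in> V2 - {r2}"
        have v: "M1 p q = M2s p q"
          unfolding M1_def M2s_def M2_def using A.hd_22[OF pp qq] B.hd_22[OF pp qq] sw2[OF pp] sw2[OF qq] by simp
        show ?thesis unfolding v using i12[OF pp] i12[OF qq] by simp
      qed
      have bnd2: "qf W M2s x - qf W M1 x \<ge> 2 * 1 * (\<Sum>p\<in>W. a2 p * x p) * (\<Sum>p\<in>W. i1 p * x p)"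
        by (rule qf_diff_bound[OF finW x0 pw2])
      have sa2: "(\<Sum>p\<in>W. a2 p * x p) = S2 + x u1 - x u2"
      proof -
        have "(\<Sum>p\<in>W. a2 p * x p) = (\<Sum>p\<in>W. i2 p * x p) + (\<Sum>p\<in>W. du1 p * x p) - (\<Sum>p\<in>W. du2 p * x p)"
          unfolding a2_def by (simp add: algebra_simps sum.distrib sum_subtractf)
        then show ?thesis using si2 sdu1 sdu2 by simp
      qed
      have F2: "lam2 - lam1 \<ge> 2 * (S2 + x u1 - x u2) * S1" using bnd2 si1 sa2 Q1 Q2s by simp
      define ev where "ev v = i1 v + i2 v + du1 v - du2 v" for v
      have pev: "M1 u2 v - M1 u1 v = ev v" if v: "v \<in> W" for v
      proof -
        from pW[OF v] consider (h) "v \<in> VH" | (one) "v \<in> V1 - {r1}" | (two) "v \<in> V2 - {r2}" by blast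
        then show ?thesis
        proof cases
          case h
          have e: "M1 u2 v - M1 u1 v = real (?h u2 v) - real (?h u1 v)"
            using A.hd_HH[OF u(2) h] A.hd_HH[OF u(1) h] unfolding M1_def by simp
          have r: "ev v = du1 v - du2 v" unfolding ev_def using i1H[OF h] i2H[OF h] by simp
          show ?thesis
          proof (cases "v = u1")
            case True then show ?thesis unfolding e r using h11 h21 du1u1 du2u1 by simp
          next
            case F: False
            show ?thesis
            proof (cases "v = u2")
              case True then show ?thesis unfolding e r using h11 h12 du1u2 du2u2 by simp
            next
              case False then show ?thesis unfolding e r using twin[OF h F False] du1ne[OF F] du2ne[OF False] by simp
            qed
          qed
        next
          case one
          have r: "ev v = 1" unfolding ev_def using i11[OF one] i21[OF one] du1_1[OF one] du2_1[OF one] by simp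
          show ?thesis unfolding r using A.hd_H1[OF u(2) one] A.hd_H1[OF u(1) one] h11 h21
            unfolding M1_def by simp
        next
          case two
          have r: "ev v = 1" unfolding ev_def using i12[OF two] i22[OF two] du1_2[OF two] du2_2[OF two] by simp
          show ?thesis unfolding r using A.hd_H2[OF u(2) two] A.hd_H2[OF u(1) two] h11 h21
            unfolding M1_def by simp
        qed
      qed
      have E: "lam1 * x u2 - lam1 * x u1 = S1 + S2 + x u1 - x u2"
      proof -
        have "lam1 * x u2 - lam1 * x u1 = (\<Sum>v\<in>W. M1 u2 v * x v) - (\<Sum>v\<in>W. M1 u1 v * x v)"
          using eqA[OF uW(1)] eqA[OF uW(2)] by simp
        also have "\<dots> = (\<Sum>v\<in>W. (M1 u2 v - M1 u1 v) * x v)"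
          by (simp add: sum_subtractf[symmetric] algebra_simps)
        also have "\<dots> = (\<Sum>v\<in>W. ev v * x v)" using pev by (intro sum.cong refl) simp
        also have "\<dots> = (\<Sum>v\<in>W. i1 v * x v) + (\<Sum>v\<in>W. i2 v * x v) + (\<Sum>v\<in>W. du1 v * x v) - (\<Sum>v\<in>W. du2 v * x v)"
          unfolding ev_def by (simp add: algebra_simps sum.distrib sum_subtractf)
        also have "\<dots> = S1 + S2 + x u1 - x u2" using si1 si2 sdu1 sdu2 by simp
        finally show ?thesis .
      qed
      have G: "lam1 * x u1 \<ge> x u2"
      proof -
        have "M1 u1 u2 * x u2 \<le> (\<Sum>v\<in>W. M1 u1 v * x v)"
        proof (rule member_le_sum[OF uW(2) _ finW])
          fix v assume "v \<in> W - {u2}"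
          then show "0 \<le> M1 u1 v * x v" using x0 unfolding M1_def by simp
        qed
        moreover have "M1 u1 u2 = 1" using A.hd_HH[OF u(1) u(2)] h12 unfolding M1_def by simp
        ultimately show ?thesis using eqA[OF uW(1)] by simp
      qed
      show ?thesis
      proof (rule ccontr)
        assume "\<not> lam1 < lam2"
        then have le: "lam2 \<le> lam1" by simp
        define D where "D = x u2 - x u1"
        have a1: "(S1 - D) * S2 \<le> 0" using F1 le unfolding D_def by (simp add: algebra_simps)
        have s1D: "S1 \<le> D"
        proof (rule ccontr)
          assume "\<not> S1 \<le> D"
          then have "(S1 - D) * S2 > 0" using S2pos by simp
          then show False using a1 by simp
        qed
        have a2: "(S2 - D) * S1 \<le> 0" using F2 le unfolding D_def by (simp add: algebra_simps)
        have s2D: "S2 \<le> D"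
        proof (rule ccontr)
          assume "\<not> S2 \<le> D"
          then have "(S2 - D) * S1 > 0" using S1pos by simp
          then show False using a2 by simp
        qed
        have Dpos: "D > 0" using s1D S1pos by simp
        have "lam1 * D = S1 + S2 - D" using E unfolding D_def by (simp add: algebra_simps)
        then have "(lam1 - 1) * D \<le> 0" using s1D s2D by (simp add: algebra_simps)
        then have l1: "lam1 \<le> 1" using Dpos by (simp add: mult_le_0_iff)
        have "(lam1 - 1) * x u1 \<ge> D" using G unfolding D_def by (simp add: algebra_simps)
        then have "(lam1 - 1) * x u1 > 0" using Dpos by simp
        then have "lam1 > 1" using xu1 by (simp add: zero_less_mult_iff)
        then show False using l1 by simp
      qed
    qed
  qed
qed

end
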